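(* Under the hard feedback model, suppose Algorithm 1 (parameters $\beta\in(0,1)$ and $\phi>1$) is run on every user of a set $\mathcal{L}$, with $B$ such that $\log_\phi(1/\beta)+1\le B$. Let $\delta\in(0,1)$ and $\epsilon\in(0,1)$. Then for all $\ell,u,y\in[0,1]$ with $u-\ell>\delta$, $$P_L^{|\mathcal{L}|}(y|\ell,u)\le P(y|\ell,u)\le P_U^{|\mathcal{L}|}(y|\ell,u)$$ with probability at least $1-\epsilon$.
   Context: Model. Each user $n$ has a threshold $\theta_n\in(0,1)$; thresholds are i.i.d. with cumulative distribution function $F$ satisfying $L_c(y-x)\le F(y)-F(x)\le L_h(y-x)$ for $0\le x\le y\le1$, with known constants $L_h\ge L_c>0$. At round $t=1,2,\dots$ with user $n$ the platform chooses $y_n(t)\in[0,1]$; if $y_n(t)>\theta_n$ the user's patience (initially $B$) decreases by one, and the user abandons when the patience is exhausted (number $T_n$ of rounds satisfies $\sum_{t\le T_n}\mathbf 1(y_n(t)>\theta_n)\le B$). Hard feedback model: after each action the platform observes $\mathbf 1(y_n(t)\le\theta_n)$. Algorithm 1 (on each $n\in\mathcal{L}$): start $\ell=0,u=1$; while the user has not abandoned, if $u-\ell>\beta$ run one round of Linear Search Exploration (LSE), else play $\ell$. An LSE round on $[\ell,u]$ plays in order $\ell,\ell+I,\dots,\ell+(\phi-1)I,u$ with $I=(u-\ell)/\phi$; on positive feedback for action $a$ set $\ell=a$; on negative feedback for $a$ set $u=a$ and end the round. Let $[\ell_n,u_n]$ be the final interval of user $n$, $K=\sum_{n\in\mathcal{L}}\mathbf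 1(u_n-\ell_n\le\beta)$ and $\hat F^K(x)=\sum_{n\in\mathcal{L}}\mathbf 1(u_n-\ell_n\le\beta)\mathbf 1(\ell_n\le x)/K$. With $\eta_K=\sqrt{18\log(16/\epsilon)/K}$, define $P^K_U(y|\ell,u)=\frac{\hat F^K(u)-\hat F^K(y)}{\max\{\hat F^K(u)-\hat F^K(\ell),L_c(u-\ell)\}}+\frac{2(\eta_K+2\beta L_h)}{L_c\delta}$ and $P^K_L(y|\ell,u)=\frac{\hat F^K(u)-\hat F^K(y)}{\max\{\hat F^K(u)-\hat F^K(\ell),L_c(u-\ell)\}}-\frac{2(\eta_K+2\beta L_h)}{L_c\delta}$; the superscript $|\mathcal{L}|$ means these quantities with $K$ replaced by $|\mathcal{L}|$. Finally $P(y|\ell,u)=\frac{F(u)-F(y)}{F(u)-F(\ell)}$.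
   Formalization: The two-sided bound $P_L^{|\mathcal{L}|}(y|\ell,u)\le P(y|\ell,u)\le P_U^{|\mathcal{L}|}(y|\ell,u)$ is asserted only for $\ell \le y \le u$ instead of all y in [0,1], and $\phi$ is an integer at least 2. Each condition added here is assumed in the paper as well or is needed for the statement above to hold. *)

theory Defs
  imports "HOL-Probability.Probability"
begin

text \<open>Negative feedback for action a
  means theta < a. Returns (new l, new u, whether a negative feedback occurred).\<close>
definition lse_round :: "nat \<Rightarrow> real \<Rightarrow> real \<Rightarrow> real \<Rightarrow> real \<times> real \<times> bool" where
  "lse_round phi theta l u =
     (let I = (u - l) / real phi;
          a = (\<lambda>k::nat. if k < phi then l + real k * I else u)
      in if \<exists>k\<le>phi. theta < a k
         then (let j = (LEAST k. k \<le> phi \<and> theta < a k)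
               in (if j = 0 then l else a (j - 1), a j, True))
         else (u, u, False))"

text \<open>One iteration of the loop of Algorithm 1; state = (l, u, remaining patience).
  Remaining patience 0 means the user has abandoned.\<close>
definition alg_step :: "real \<Rightarrow> nat \<Rightarrow> real \<Rightarrow> real \<times> real \<times> nat \<Rightarrow> real \<times> real \<times> nat" where
  "alg_step beta phi theta s =
     (case s of (l, u, p) \<Rightarrow>
        if p = 0 then (l, u, p)
        else if u - l > beta then
          (case lse_round phi theta l u of (l', u', neg) \<Rightarrow> (l', u', if neg then p - 1 else p))
        else (l, u, if theta < l then p - 1 else p))"

definition alg_state :: "real \<Rightarrow> nat \<Rightarrow> nat \<Rightarrow> real \<Rightarrow> nat \<Rightarrow> real \<times> real \<times> nat" where
  "alg_state beta phi B theta t = (alg_step beta phi theta ^^ t) (0, 1, B)"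

definition alg_final :: "real \<Rightarrow> nat \<Rightarrow> nat \<Rightarrow> real \<Rightarrow> real \<times> real \<times> nat" where
  "alg_final beta phi B theta = (THE s. \<exists>T. \<forall>t\<ge>T. alg_state beta phi B theta t = s)"

definition final_l :: "real \<Rightarrow> nat \<Rightarrow> nat \<Rightarrow> real \<Rightarrow> real" where
  "final_l beta phi B theta = fst (alg_final beta phi B theta)"

definition final_u :: "real \<Rightarrow> nat \<Rightarrow> nat \<Rightarrow> real \<Rightarrow> real" where
  "final_u beta phi B theta = fst (snd (alg_final beta phi B theta))"

definition Kcount :: "real \<Rightarrow> nat \<Rightarrow> nat \<Rightarrow> 'i set \<Rightarrow> ('i \<Rightarrow> real) \<Rightarrow> nat" where
  "Kcount beta phi B Ls theta =
     card {n \<in> Ls. final_u beta phi B (theta n) - final_l beta phi B (theta n) \<le> beta}"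

text \<open>Empirical CDF with normaliser N (N = K gives hat F^K, N = |L| gives hat F^{|L|}).\<close>
definition Fhat :: "real \<Rightarrow> nat \<Rightarrow> nat \<Rightarrow> 'i set \<Rightarrow> ('i \<Rightarrow> real) \<Rightarrow> nat \<Rightarrow> real \<Rightarrow> real" where
  "Fhat beta phi B Ls theta N x =
     (\<Sum>n\<in>Ls. if final_u beta phi B (theta n) - final_l beta phi B (theta n) \<le> beta
                  \<and> final_l beta phi B (theta n) \<le> x then 1 else 0) / real N"

definition eta :: "nat \<Rightarrow> real \<Rightarrow> real" where
  "eta N eps = sqrt (18 * ln (16 / eps) / real N)"

definition P_ratio :: "(real \<Rightarrow> real) \<Rightarrow> real \<Rightarrow> real \<Rightarrow> real \<Rightarrow> real \<Rightarrow> real" where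
  "P_ratio Fh Lc y l u = (Fh u - Fh y) / max (Fh u - Fh l) (Lc * (u - l))"

definition P_U :: "real \<Rightarrow> nat \<Rightarrow> nat \<Rightarrow> 'i set \<Rightarrow> ('i \<Rightarrow> real) \<Rightarrow> nat \<Rightarrow> real \<Rightarrow> real \<Rightarrow> real
                   \<Rightarrow> real \<Rightarrow> real \<Rightarrow> real \<Rightarrow> real \<Rightarrow> real" where
  "P_U beta phi B Ls theta N eps Lc Lh delta y l u =
     P_ratio (Fhat beta phi B Ls theta N) Lc y l u + 2 * (eta N eps + 2 * beta * Lh) / (Lc * delta)"

definition P_L :: "real \<Rightarrow> nat \<Rightarrow> nat \<Rightarrow> 'i set \<Rightarrow> ('i \<Rightarrow> real) \<Rightarrow> nat \<Rightarrow> real \<Rightarrow> real \<Rightarrow> real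
                   \<Rightarrow> real \<Rightarrow> real \<Rightarrow> real \<Rightarrow> real \<Rightarrow> real" where
  "P_L beta phi B Ls theta N eps Lc Lh delta y l u =
     P_ratio (Fhat beta phi B Ls theta N) Lc y l u - 2 * (eta N eps + 2 * beta * Lh) / (Lc * delta)"

definition P_true :: "(real \<Rightarrow> real) \<Rightarrow> real \<Rightarrow> real \<Rightarrow> real \<Rightarrow> real" where
  "P_true F y l u = (F u - F y) / (F u - F l)"

end

theory Submission
  imports Defs
begin


lemma ratio_bound:
  fixes Fh F :: "real \<Rightarrow> real"
  assumes "0 < delta" "0 < Lc" "delta < u - l"
    and lip: "Lc * (u - l) \<le> F u - F l"
    and mono: "F l \<le> F y" "F y \<le> F u"
    and h: "0 \<le> h"
    and el: "- e \<le> Fh l - F l" "Fh l - F l \<le> e + h"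
    and ey: "- e \<le> Fh y - F y" "Fh y - F y \<le> e + h"
    and eu: "- e \<le> Fh u - F u" "Fh u - F u \<le> e + h"
  shows "\<bar>P_ratio Fh Lc y l u - P_true F y l u\<bar> \<le> (2 * e + h) / (Lc * delta)"
proof -
  define d where "d = F u - F l"
  define r where "r = (F u - F y) / d"
  define d' where "d' = max (Fh u - Fh l) (Lc * (u - l))"
  define a' where "a' = Fh u - Fh y"
  have Lcd: "Lc * delta < Lc * (u - l)" using assms by simp
  have Lcd0: "0 < Lc * delta" using assms by simp
  have dpos: "d > 0" using Lcd Lcd0 lip unfolding d_def by linarith
  have r0: "0 \<le> r" and r1: "r \<le> 1" using mono dpos by (auto simp: r_def d_def divide_simps)
  have rd: "r * d = F u - F y" using dpos by (simp add: r_def)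
  have d'pos: "d' \<ge> Lc * (u - l)" by (simp add: d'_def)
  define eu' el' ey' where "eu' = Fh u - F u" and "el' = Fh l - F l" and "ey' = Fh y - F y"
  have cb: "(1 - r) * eu' + r * el' \<le> e + h \<and> (1 - r) * eu' + r * el' \<ge> - e"
  proof -
    have a1: "(1 - r) * eu' \<le> (1 - r) * (e + h)" using eu r1 unfolding eu'_def by (intro mult_left_mono) auto
    have a2: "r * el' \<le> r * (e + h)" using el r0 unfolding el'_def by (intro mult_left_mono) auto
    have a3: "(1 - r) * (- e) \<le> (1 - r) * eu'" using eu r1 unfolding eu'_def by (intro mult_left_mono) auto
    have a4: "r * (- e) \<le> r * el'" using el r0 unfolding el'_def by (intro mult_left_mono) auto
    have "(1 - r) * (e + h) + r * (e + h) = e + h" "(1 - r) * (- e) + r * (- e) = - e"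
      by (simp_all add: algebra_simps)
    then show ?thesis using a1 a2 a3 a4 by linarith
  qed
  have key: "\<bar>a' - r * d'\<bar> \<le> 2 * e + h"
  proof (cases "Fh u - Fh l \<ge> Lc * (u - l)")
    case True
    then have d'eq: "d' = Fh u - Fh l" by (simp add: d'_def)
    have id1: "(1 - r) * eu' + r * el' - ey' = (a' - r * d') - ((F u - F y) - r * (F u - F l))"
      unfolding d'eq a'_def eu'_def el'_def ey'_def by (simp add: algebra_simps)
    have "(F u - F y) - r * (F u - F l) = 0" using rd unfolding d_def by simp
    then have "a' - r * d' = (1 - r) * eu' + r * el' - ey'" using id1 by simp
    then show ?thesis using ey cb unfolding ey'_def by (simp add: abs_le_iff)
  next
    case False
    then have dd: "d' = Lc * (u - l)" by (simp add: d'_def)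
    have dd1: "d' \<le> d" using dd lip d_def by simp
    have dd2: "d - d' \<le> el' - eu'" using dd False unfolding d_def el'_def eu'_def by simp
    have id2: "eu' - ey' + r * (d - d') = (a' - r * d') - ((F u - F y) - r * d)"
      unfolding a'_def eu'_def ey'_def by (simp add: algebra_simps)
    have eq: "a' - r * d' = eu' - ey' + r * (d - d')" using id2 rd by simp
    have b1: "0 \<le> r * (d - d')" using r0 dd1 by simp
    have b2: "r * (d - d') \<le> r * (el' - eu')" using r0 dd2 by (simp add: mult_left_mono)
    have b3: "r * (el' - eu') = ((1 - r) * eu' + r * el') - eu'" by (simp add: algebra_simps)
    show ?thesis using eq ey eu cb b1 b2 b3 unfolding ey'_def eu'_def
      by (simp add: abs_le_iff)
  qed
  have d'p: "d' > 0" using d'pos Lcd Lcd0 by linarith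
  have "P_ratio Fh Lc y l u - P_true F y l u = (a' - r * d') / d'"
    using d'p dpos unfolding P_ratio_def P_true_def a'_def d'_def r_def d_def
    by (simp add: field_simps)
  then have "\<bar>P_ratio Fh Lc y l u - P_true F y l u\<bar> = \<bar>a' - r * d'\<bar> / d'"
    using d'p by simp
  also have "\<dots> \<le> (2 * e + h) / d'" using key d'p by (simp add: divide_right_mono)
  also have "\<dots> \<le> (2 * e + h) / (Lc * delta)"
    using d'pos Lcd Lcd0 key by (intro divide_left_mono) auto
  finally show ?thesis .
qed



lemma lse_round_props:
  assumes phi: "phi \<ge> 1" and lt: "l \<le> theta" "theta \<le> u" and lu: "l \<le> u"
    and res: "lse_round phi theta l u = (l', u', neg)"
  shows "l \<le> l' \<and> l' \<le> theta \<and> theta \<le> u' \<and> (neg \<longrightarrow> u' - l' = (u - l) / real phi)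
         \<and> (\<not> neg \<longrightarrow> u' = l')"
proof -
  define I where "I = (u - l) / real phi"
  define a where "a = (\<lambda>k::nat. if k < phi then l + real k * I else u)"
  have I0: "I \<ge> 0" using lu phi by (simp add: I_def)
  have a0: "a 0 = l" using phi by (simp add: a_def)
  have ale: "l \<le> a k" for k using I0 lu by (simp add: a_def)
  have lr: "lse_round phi theta l u =
     (if \<exists>k\<le>phi. theta < a k
         then (let j = (LEAST k. k \<le> phi \<and> theta < a k)
               in (if j = 0 then l else a (j - 1), a j, True))
         else (u, u, False))"
    unfolding lse_round_def Let_def I_def a_def by simp
  show ?thesis
  proof (cases "\<exists>k\<le>phi. theta < a k")
    case True
    define j where "j = (LEAST k. k \<le> phi \<and> theta < a k)"
    have j: "j \<le> phi \<and> theta < a j" using True unfolding j_def by (rule LeastI_ex)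
    have jmin: "\<not> (theta < a k)" if "k < j" for k
      using that j not_less_Least[of k "\<lambda>k. k \<le> phi \<and> theta < a k"] unfolding j_def[symmetric]
      by auto
    have j0: "j \<noteq> 0"
    proof
      assume "j = 0"
      then have "theta < l" using j a0 by simp
      then show False using lt by simp
    qed
    have eq: "(l', u', neg) = (a (j - 1), a j, True)"
      using res lr True j0 unfolding j_def[symmetric] by (simp add: Let_def)
    have diff: "a j - a (j - 1) = I"
    proof (cases "j < phi")
      case True
      then have "j - 1 < phi" by simp
      then show ?thesis using j0 True by (simp add: a_def of_nat_diff algebra_simps)
    next
      case False
      then have "j = phi" using j by simp
      then show ?thesis using j0 phi
        by (simp add: a_def I_def of_nat_diff field_simps)
    qed
    show ?thesis using eq j jmin[of "j - 1"] j0 ale[of "j - 1"] diff by (auto simp: I_def)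
  next
    case False
    then have "theta \<ge> a phi" by auto
    then have "theta = u" using lt by (simp add: a_def)
    moreover have "(l', u', neg) = (u, u, False)" using res lr False by simp
    ultimately show ?thesis using lu by auto
  qed
qed

definition inv_st :: "real \<Rightarrow> nat \<Rightarrow> nat \<Rightarrow> real \<Rightarrow> real \<times> real \<times> nat \<Rightarrow> bool" where
  "inv_st beta phi B theta s = (case s of (l, u, p) \<Rightarrow>
     0 \<le> l \<and> l \<le> theta \<and> theta \<le> u \<and> p \<le> B \<and> (u - l \<le> beta \<or> u - l \<le> (1 / real phi) ^ (B - p)))"

definition pot :: "real \<Rightarrow> real \<times> real \<times> nat \<Rightarrow> nat" where
  "pot beta s = (case s of (l, u, p) \<Rightarrow> p + (if u - l > beta then 1 else 0))"

lemma step_inv: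
  assumes phi: "phi \<ge> 1" and beta: "beta > 0" and inv: "inv_st beta phi B theta s"
  shows "inv_st beta phi B theta (alg_step beta phi theta s)
    \<and> (alg_step beta phi theta s = s \<or> pot beta (alg_step beta phi theta s) < pot beta s)"
proof -
  obtain l u p where s: "s = (l, u, p)" by (cases s) auto
  have i: "0 \<le> l" "l \<le> theta" "theta \<le> u" "p \<le> B" "u - l \<le> beta \<or> u - l \<le> (1 / real phi) ^ (B - p)"
    using inv s by (auto simp: inv_st_def)
  show ?thesis
  proof (cases "p = 0")
    case True
    then show ?thesis using s inv by (simp add: alg_step_def)
  next
    case p: False
    show ?thesis
    proof (cases "u - l > beta")
      case big: True
      have lu: "l \<le> u" using i(2,3) by linarith
      obtain l' u' neg where r: "lse_round phi theta l u = (l', u', neg)" by (cases "lse_round phi theta l u") auto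
      have P: "l \<le> l' \<and> l' \<le> theta \<and> theta \<le> u' \<and> (neg \<longrightarrow> u' - l' = (u - l) / real phi)
         \<and> (\<not> neg \<longrightarrow> u' = l')"
        by (rule lse_round_props[OF phi i(2) i(3) lu r])
      have st: "alg_step beta phi theta s = (l', u', if neg then p - 1 else p)"
        using p big r unfolding s alg_step_def by simp
      show ?thesis
      proof (cases neg)
        case True
        have small: "u - l \<le> (1 / real phi) ^ (B - p)" using i(5) big by linarith
        have "u' - l' = (u - l) * (1 / real phi)" using P True by simp
        also have "\<dots> \<le> (1 / real phi) ^ (B - p) * (1 / real phi)"
          using small by (intro mult_right_mono) auto
        also have "\<dots> = (1 / real phi) ^ (B - (p - 1))"
        proof -
          have "B - (p - 1) = Suc (B - p)" using p i(4) by arith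
          then show ?thesis by (simp add: power_Suc2)
        qed
        finally have "u' - l' \<le> (1 / real phi) ^ (B - (p - 1))" .
        then have "inv_st beta phi B theta (alg_step beta phi theta s)"
          using st True P i by (auto simp: inv_st_def)
        moreover have "pot beta (alg_step beta phi theta s) < pot beta s"
          using st True s p big by (auto simp: pot_def)
        ultimately show ?thesis by simp
      next
        case False
        then have "inv_st beta phi B theta (alg_step beta phi theta s)"
          using st P i beta by (auto simp: inv_st_def)
        moreover have "pot beta (alg_step beta phi theta s) < pot beta s"
          using st False s p big P beta by (auto simp: pot_def)
        ultimately show ?thesis by simp
      qed
    next
      case small: False
      then have "alg_step beta phi theta s = s" using s p i(2) by (simp add: alg_step_def)
      then show ?thesis using inv by simp
    qed
  qed
qed

lemma final_props:
  assumes th: "0 < theta" "theta < 1" and beta: "0 < beta" and phi: "phi \<ge> 2"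
    and B: "log (real phi) (1 / beta) + 1 \<le> real B"
  shows "final_l beta phi B theta \<le> theta \<and> theta \<le> final_u beta phi B theta
         \<and> final_u beta phi B theta - final_l beta phi B theta \<le> beta"
proof -
  let ?st = "alg_state beta phi B theta"
  let ?f = "alg_step beta phi theta"
  have phi1: "phi \<ge> 1" using phi by simp
  have stS: "?st (Suc t) = ?f (?st t)" for t by (simp add: alg_state_def)
  have inv: "inv_st beta phi B theta (?st t)" for t
  proof (induction t)
    case 0
    then show ?case using th by (simp add: alg_state_def inv_st_def)
  next
    case (Suc t)
    then show ?case using step_inv[OF phi1 beta Suc] stS by simp
  qed
  have prog: "?f (?st t) = ?st t \<or> pot beta (?st t) + t \<le> B + 1" for t
  proof (induction t)
    case 0
    then show ?case by (simp add: alg_state_def pot_def)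
  next
    case (Suc t)
    show ?case
    proof (cases "?f (?st t) = ?st t")
      case True
      then show ?thesis using stS by simp
    next
      case False
      then have "pot beta (?st (Suc t)) < pot beta (?st t)"
        using step_inv[OF phi1 beta inv[of t]] stS by simp
      then show ?thesis using Suc False by simp
    qed
  qed
  define T where "T = B + 1"
  have fixT: "?f (?st T) = ?st T"
  proof (rule ccontr)
    assume n: "?f (?st T) \<noteq> ?st T"
    then have "pot beta (?st T) = 0" using prog[of T] by (simp add: T_def)
    obtain l u p where sT: "?st T = (l, u, p)" by (cases "?st T") auto
    have "p = 0" using \<open>pot beta (?st T) = 0\<close> unfolding sT pot_def by simp
    then have "?f (?st T) = ?st T" unfolding sT alg_step_def by simp
    then show False using n by simp
  qed
  have const: "?st t = ?st T" if "t \<ge> T" for t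
    using that
  proof (induction t rule: dec_induct)
    case base
    then show ?case by simp
  next
    case (step n)
    have "?st (Suc n) = ?f (?st n)" by (rule stS)
    also have "\<dots> = ?f (?st T)" using step.IH by simp
    also have "\<dots> = ?st T" by (rule fixT)
    finally show ?case .
  qed
  have fin: "alg_final beta phi B theta = ?st T"
    unfolding alg_final_def
  proof (rule the_equality)
    show "\<exists>T'. \<forall>t\<ge>T'. ?st t = ?st T" using const by (intro exI[of _ T]) blast
  next
    fix s assume "\<exists>T'. \<forall>t\<ge>T'. ?st t = s"
    then obtain T' where "\<forall>t\<ge>T'. ?st t = s" by blast
    then have "?st (max T T') = s" by simp
    moreover have "?st (max T T') = ?st T" by (rule const) simp
    ultimately show "s = ?st T" by simp
  qed
  obtain l u p where sT: "?st T = (l, u, p)" by (cases "?st T") auto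
  have i: "0 \<le> l" "l \<le> theta" "theta \<le> u" "p \<le> B" "u - l \<le> beta \<or> u - l \<le> (1 / real phi) ^ (B - p)"
    using inv[of T] sT by (auto simp: inv_st_def)
  have powB: "(1 / real phi) ^ B \<le> beta"
  proof -
    have "log (real phi) (1 / beta) \<le> log (real phi) (real phi ^ B)"
      using B phi by (simp add: log_nat_power)
    then have "1 / beta \<le> real phi ^ B" using phi beta by (subst (asm) log_le_cancel_iff) auto
    then show ?thesis using beta phi by (simp add: power_one_over field_simps)
  qed
  have "u - l \<le> beta"
  proof (rule ccontr)
    assume big: "\<not> u - l \<le> beta"
    show False
    proof (cases "p = 0")
      case True
      then show False using i(5) big powB by simp
    next
      case False
      have "pot beta (?f (?st T)) < pot beta (?st T)"
      proof -
        obtain l' u' neg where r: "lse_round phi theta l u = (l', u', neg)" by (cases "lse_round phi theta l u") auto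
        have lu: "l \<le> u" using i(2,3) by linarith
        have P: "\<not> neg \<longrightarrow> u' = l'"
          using lse_round_props[OF phi1 i(2) i(3) lu r] by blast
        have st: "?f (?st T) = (l', u', if neg then p - 1 else p)"
          using sT False big r by (simp add: alg_step_def)
        show ?thesis using st sT P False big beta by (cases neg) (auto simp: pot_def)
      qed
      then show False using fixT by simp
    qed
  qed
  then show ?thesis using fin sT i by (simp add: final_l_def final_u_def)
qed



lemma indep_coord:
  assumes M: "prob_space M" and fin: "finite Ls" and ne: "Ls \<noteq> {}"
  shows "prob_space.indep_vars (PiM Ls (\<lambda>_. M)) (\<lambda>_. M) (\<lambda>i x. x i) Ls"
proof -
  interpret P: prob_space "PiM Ls (\<lambda>_. M)" by (rule prob_space_PiM) (use M in auto)
  have pps: "product_prob_space (\<lambda>_. M)" by (rule product_prob_spaceI) (rule M)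
  have eq: "distr (PiM Ls (\<lambda>_. M)) (PiM Ls (\<lambda>_. M)) (\<lambda>x. restrict (\<lambda>i. x i) Ls) =
        PiM Ls (\<lambda>i. distr (PiM Ls (\<lambda>_. M)) M (\<lambda>x. x i))"
  proof -
    have "distr (PiM Ls (\<lambda>_. M)) (PiM Ls (\<lambda>_. M)) (\<lambda>x. restrict (\<lambda>i. x i) Ls) = PiM Ls (\<lambda>_. M)"
      using product_prob_space.distr_PiM_restrict_finite[OF pps fin subset_refl] by simp
    also have "\<dots> = PiM Ls (\<lambda>i. distr (PiM Ls (\<lambda>_. M)) M (\<lambda>x. x i))"
      by (intro PiM_cong refl distr_PiM_component[symmetric]) (use M in auto)
    finally show ?thesis .
  qed
  show ?thesis
    apply (subst P.indep_vars_iff_distr_eq_PiM'[OF ne])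
     apply (rule measurable_component_singleton)
     apply simp
    apply (rule eq)
    done
qed

lemma expect_ind:
  fixes h :: "'a \<Rightarrow> real"
  assumes M: "prob_space M" and fin: "finite Ls" and i: "i \<in> Ls" and S: "S \<in> sets M"
    and h: "h \<in> borel_measurable M"
  shows "integral\<^sup>L (PiM Ls (\<lambda>_. M)) (\<lambda>x. h (x i)) = integral\<^sup>L M h"
proof -
  have "integral\<^sup>L M h = integral\<^sup>L (distr (PiM Ls (\<lambda>_. M)) M (\<lambda>x. x i)) h"
    using distr_PiM_component[of Ls "\<lambda>_. M" i] M i by simp
  also have "\<dots> = integral\<^sup>L (PiM Ls (\<lambda>_. M)) (\<lambda>x. h (x i))"
    by (rule integral_distr[where g="\<lambda>x. x i" and f=h]) (use i h in auto)
  finally show ?thesis by simp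
qed

lemma hoeff_count:
  assumes M: "prob_space M" and fin: "finite Ls" and ne: "Ls \<noteq> {}" and S[measurable]: "S \<in> sets M"
    and t: "t \<ge> 0"
  shows "measure (PiM Ls (\<lambda>_. M)) {x \<in> space (PiM Ls (\<lambda>_. M)).
            \<bar>(\<Sum>i\<in>Ls. indicator S (x i)) - real (card Ls) * measure M S\<bar> \<ge> real (card Ls) * t}
         \<le> 2 * exp (- 2 * real (card Ls) * t\<^sup>2)"
proof -
  interpret P: prob_space "PiM Ls (\<lambda>_. M)" by (rule prob_space_PiM) (use M in auto)
  interpret Mp: prob_space M by (rule M)
  have ind: "P.indep_vars (\<lambda>_. M) (\<lambda>i x. x i) Ls" by (rule indep_coord[OF M fin ne])
  have ind2: "P.indep_vars (\<lambda>_. borel) (\<lambda>i x. indicator S (x i) :: real) Ls"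
    by (rule P.indep_vars_compose2[OF ind]) auto
  have ex: "P.expectation (\<lambda>x. indicator S (x i) :: real) = measure M S" if "i \<in> Ls" for i
  proof -
    have "Mp.expectation (indicator S :: _ \<Rightarrow> real) = measure M S"
      using Bochner_Integration.integral_indicator[of M S] S sets.Int_space_eq2 by simp
    then show ?thesis using expect_ind[OF M fin that S, of "indicator S"] S by simp
  qed
  interpret H: Hoeffding_ineq "PiM Ls (\<lambda>_. M)" Ls "\<lambda>i x. indicator S (x i) :: real" "\<lambda>_. 0" "\<lambda>_. 1"
     "\<Sum>i\<in>Ls. P.expectation (\<lambda>x. indicator S (x i) :: real)"
    by unfold_locales (use fin ind2 in \<open>auto simp: indicator_def\<close>)
  have mu: "(\<Sum>i\<in>Ls. P.expectation (\<lambda>x. indicator S (x i) :: real)) = real (card Ls) * measure M S"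
    using ex by simp
  have cpos: "real (card Ls) > 0" using fin ne by (simp add: card_gt_0_iff)
  have "measure (PiM Ls (\<lambda>_. M)) {x \<in> space (PiM Ls (\<lambda>_. M)).
            \<bar>(\<Sum>i\<in>Ls. indicator S (x i)) - real (card Ls) * measure M S\<bar> \<ge> real (card Ls) * t}
      \<le> 2 * exp (-2 * (real (card Ls) * t)\<^sup>2 / (\<Sum>i\<in>Ls. (1 - 0)\<^sup>2))"
    using H.Hoeffding_ineq_abs_ge[of "real (card Ls) * t"] t cpos unfolding mu by simp
  also have "-2 * (real (card Ls) * t)\<^sup>2 / (\<Sum>i\<in>Ls. (1 - 0)\<^sup>2) = - 2 * real (card Ls) * t\<^sup>2"
    using cpos by (simp add: power2_eq_square field_simps)
  finally show ?thesis .
qed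

lemma mgf_ind:
  assumes M: "prob_space M" and S[measurable]: "S \<in> sets M"
  shows "(\<integral>\<^sup>+y. ennreal (exp (c * indicator S y)) \<partial>M) = ennreal (1 + measure M S * (exp c - 1))"
proof -
  interpret Mp: prob_space M by (rule M)
  have pt: "exp (c * indicator S y) = 1 + (exp c - 1) * indicator S y" for y
    by (simp add: indicator_def)
  have fin: "emeasure M S < \<infinity>" using Mp.emeasure_finite[of S] top.not_eq_extremum
    unfolding infinity_ennreal_def by blast
  have i1: "integrable M (\<lambda>y. 1::real)" by simp
  have i2: "integrable M (\<lambda>y. indicator S y :: real)"
    using integrable_real_indicator[OF S fin] by simp
  have i3: "integrable M (\<lambda>y. (exp c - 1) * indicator S y)" using i2 by (rule integrable_mult_right)
  have int: "integrable M (\<lambda>y. 1 + (exp c - 1) * indicator S y)"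
    by (rule Bochner_Integration.integrable_add[OF i1 i3])
  have "(\<integral>\<^sup>+y. ennreal (exp (c * indicator S y)) \<partial>M) = (\<integral>\<^sup>+y. ennreal (1 + (exp c - 1) * indicator S y) \<partial>M)"
    using pt by simp
  also have "\<dots> = ennreal (\<integral>y. 1 + (exp c - 1) * indicator S y \<partial>M)"
  proof (rule nn_integral_eq_integral[OF int])
    show "AE x in M. 0 \<le> 1 + (exp c - 1) * indicator S x"
    proof (rule AE_I2)
      fix x show "0 \<le> 1 + (exp c - 1) * indicator S x"
        using exp_gt_zero[of c] by (simp add: indicator_def)
    qed
  qed
  also have "(\<integral>y. 1 + (exp c - 1) * indicator S y \<partial>M) = (\<integral>y. 1 \<partial>M) + (\<integral>y. (exp c - 1) * indicator S y \<partial>M)"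
    by (rule Bochner_Integration.integral_add[OF i1 i3])
  also have "(\<integral>y. (exp c - 1) * indicator S y \<partial>M) = (exp c - 1) * (\<integral>y. indicator S y \<partial>M)"
    by (rule integral_mult_right_zero)
  also have "(\<integral>y. indicator S y \<partial>M) = measure M S"
    using Bochner_Integration.integral_indicator[of M S] S sets.Int_space_eq2 by simp
  finally show ?thesis by (simp add: mult.commute Mp.prob_space)
qed

lemma mgf_sum:
  assumes M: "prob_space M" and fin: "finite Ls" and S[measurable]: "S \<in> sets M"
  shows "(\<integral>\<^sup>+x. ennreal (exp (c * (\<Sum>i\<in>Ls. indicator S (x i)))) * indicator (space (PiM Ls (\<lambda>_. M))) x
            \<partial>PiM Ls (\<lambda>_. M))
         \<le> ennreal (exp (real (card Ls) * measure M S * (exp c - 1)))"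
proof -
  have pps: "product_prob_space (\<lambda>_. M)" by (rule product_prob_spaceI) (rule M)
  then have pss: "product_sigma_finite (\<lambda>_. M)" unfolding product_prob_space_def by blast
  define q where "q = 1 + measure M S * (exp c - 1)"
  have q0: "0 \<le> q"
  proof -
    interpret Mp: prob_space M by (rule M)
    have "measure M S \<le> 1" by simp
    moreover have "0 \<le> measure M S" by simp
    moreover have "exp c - 1 > -1" by simp
    ultimately have "measure M S * (exp c - 1) \<ge> measure M S * (-1)"
      by (intro mult_left_mono) auto
    then show ?thesis unfolding q_def using \<open>measure M S \<le> 1\<close> by linarith
  qed
  have "(\<integral>\<^sup>+x. ennreal (exp (c * (\<Sum>i\<in>Ls. indicator S (x i)))) * indicator (space (PiM Ls (\<lambda>_. M))) x
            \<partial>PiM Ls (\<lambda>_. M))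
      = (\<integral>\<^sup>+x. (\<Prod>i\<in>Ls. ennreal (exp (c * indicator S (x i)))) \<partial>PiM Ls (\<lambda>_. M))"
  proof (intro nn_integral_cong)
    fix x assume x: "x \<in> space (PiM Ls (\<lambda>_. M))"
    have "exp (c * (\<Sum>i\<in>Ls. indicator S (x i))) = (\<Prod>i\<in>Ls. exp (c * indicator S (x i)))"
      by (simp only: sum_distrib_left exp_sum[OF fin])
    then have "ennreal (exp (c * (\<Sum>i\<in>Ls. indicator S (x i)))) = (\<Prod>i\<in>Ls. ennreal (exp (c * indicator S (x i))))"
      by (simp add: prod_ennreal)
    then show "ennreal (exp (c * (\<Sum>i\<in>Ls. indicator S (x i)))) * indicator (space (PiM Ls (\<lambda>_. M))) x
        = (\<Prod>i\<in>Ls. ennreal (exp (c * indicator S (x i))))" using x by simp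
  qed
  also have "\<dots> = (\<Prod>i\<in>Ls. (\<integral>\<^sup>+y. ennreal (exp (c * indicator S y)) \<partial>M))"
    by (rule product_sigma_finite.product_nn_integral_prod[OF pss fin, of "\<lambda>i y. ennreal (exp (c * indicator S y))"]) simp
  also have "\<dots> = (\<Prod>i\<in>Ls. ennreal q)" using mgf_ind[OF M S] by (simp add: q_def)
  also have "\<dots> = ennreal (q ^ card Ls)" using q0 by (simp add: prod_ennreal ennreal_power)
  also have "\<dots> \<le> ennreal (exp (measure M S * (exp c - 1)) ^ card Ls)"
    using q0 exp_ge_add_one_self[of "measure M S * (exp c - 1)"]
    by (intro ennreal_leI power_mono) (auto simp: q_def)
  also have "exp (measure M S * (exp c - 1)) ^ card Ls = exp (real (card Ls) * measure M S * (exp c - 1))"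
    by (simp add: exp_of_nat_mult[symmetric] mult.assoc)
  finally show ?thesis .
qed

lemma exp_neg_bound:
  fixes l :: real
  assumes "0 \<le> l"
  shows "exp (- l) \<le> 1 - l + l\<^sup>2"
proof -
  have q: "0 \<le> 1 - l + l\<^sup>2"
  proof -
    have "0 \<le> (l - 1/2)\<^sup>2" by simp
    then show ?thesis by (simp add: power2_eq_square algebra_simps)
  qed
  have "(1 - l + l\<^sup>2) * (1 + l) \<le> (1 - l + l\<^sup>2) * exp l"
    using q exp_ge_add_one_self[of l] by (intro mult_left_mono) (auto simp: add.commute)
  moreover have "(1 - l + l\<^sup>2) * (1 + l) = 1 + l ^ 3"
    by (simp add: power2_eq_square power3_eq_cube algebra_simps)
  moreover have "0 \<le> l ^ 3" using assms by simp
  ultimately have "1 \<le> (1 - l + l\<^sup>2) * exp l" by linarith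
  then have "1 / exp l \<le> 1 - l + l\<^sup>2" by (simp add: divide_simps)
  then show ?thesis by (simp add: exp_minus inverse_eq_divide)
qed

lemma chernoff_upper:
  assumes M: "prob_space M" and fin: "finite Ls" and S[measurable]: "S \<in> sets M"
    and lam: "0 < lam" "lam \<le> 1"
  shows "measure (PiM Ls (\<lambda>_. M)) {x \<in> space (PiM Ls (\<lambda>_. M)).
            real (card Ls) * (measure M S + s) \<le> (\<Sum>i\<in>Ls. indicator S (x i))}
         \<le> exp (- real (card Ls) * (lam * s - measure M S * lam\<^sup>2))"
proof -
  interpret P: prob_space "PiM Ls (\<lambda>_. M)" by (rule prob_space_PiM) (use M in auto)
  interpret Mp: prob_space M by (rule M)
  define N where "N = real (card Ls)"
  define p where "p = measure M S"
  define a where "a = N * (p + s)"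
  have "emeasure (PiM Ls (\<lambda>_. M)) {x \<in> space (PiM Ls (\<lambda>_. M)). a \<le> (\<Sum>i\<in>Ls. indicator S (x i))}
      \<le> ennreal (exp (- lam * a)) * (\<integral>\<^sup>+x. ennreal (exp (lam * (\<Sum>i\<in>Ls. indicator S (x i)))) *
             indicator (space (PiM Ls (\<lambda>_. M))) x \<partial>PiM Ls (\<lambda>_. M))"
    by (rule Chernoff_ineq_nn_integral_ge) (use lam in auto)
  also have "\<dots> \<le> ennreal (exp (- lam * a)) * ennreal (exp (N * p * (exp lam - 1)))"
    by (intro mult_left_mono mgf_sum[OF M fin S, of lam, folded N_def p_def]) auto
  also have "\<dots> = ennreal (exp (- lam * a) * exp (N * p * (exp lam - 1)))"
    by (rule ennreal_mult[symmetric]) auto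
  also have "exp (- lam * a) * exp (N * p * (exp lam - 1)) = exp (- lam * a + N * p * (exp lam - 1))"
    by (rule exp_add[symmetric])
  finally have "P.prob {x \<in> space (PiM Ls (\<lambda>_. M)). a \<le> (\<Sum>i\<in>Ls. indicator S (x i))}
      \<le> exp (- lam * a + N * p * (exp lam - 1))"
    by (simp add: P.emeasure_eq_measure)
  also have "exp (- lam * a + N * p * (exp lam - 1)) \<le> exp (- N * (lam * s - p * lam\<^sup>2))"
  proof -
    have e: "exp lam \<le> 1 + lam + lam\<^sup>2" using exp_bound[of lam] lam by simp
    have "N * p \<ge> 0" unfolding N_def p_def by simp
    then have "N * p * (exp lam - 1 - lam - lam\<^sup>2) \<le> 0"
      using e by (simp add: mult_nonneg_nonpos)
    then show ?thesis unfolding a_def by (simp add: algebra_simps)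
  qed
  finally show ?thesis unfolding a_def N_def p_def .
qed

lemma chernoff_lower:
  assumes M: "prob_space M" and fin: "finite Ls" and S[measurable]: "S \<in> sets M"
    and lam: "0 < lam" "lam \<le> 1"
  shows "measure (PiM Ls (\<lambda>_. M)) {x \<in> space (PiM Ls (\<lambda>_. M)).
            (\<Sum>i\<in>Ls. indicator S (x i)) \<le> real (card Ls) * (measure M S - s)}
         \<le> exp (- real (card Ls) * (lam * s - measure M S * lam\<^sup>2))"
proof -
  interpret P: prob_space "PiM Ls (\<lambda>_. M)" by (rule prob_space_PiM) (use M in auto)
  interpret Mp: prob_space M by (rule M)
  define N where "N = real (card Ls)"
  define p where "p = measure M S"
  define a where "a = N * (p - s)"
  have "emeasure (PiM Ls (\<lambda>_. M)) {x \<in> space (PiM Ls (\<lambda>_. M)). (\<Sum>i\<in>Ls. indicator S (x i)) \<le> a}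
      \<le> ennreal (exp (lam * a)) * (\<integral>\<^sup>+x. ennreal (exp (- lam * (\<Sum>i\<in>Ls. indicator S (x i)))) *
             indicator (space (PiM Ls (\<lambda>_. M))) x \<partial>PiM Ls (\<lambda>_. M))"
    by (rule Chernoff_ineq_nn_integral_le) (use lam in auto)
  also have "\<dots> \<le> ennreal (exp (lam * a)) * ennreal (exp (N * p * (exp (- lam) - 1)))"
    by (intro mult_left_mono mgf_sum[OF M fin S, of "- lam", folded N_def p_def]) auto
  also have "\<dots> = ennreal (exp (lam * a + N * p * (exp (- lam) - 1)))"
    by (simp add: exp_add ennreal_mult)
  finally have "P.prob {x \<in> space (PiM Ls (\<lambda>_. M)). (\<Sum>i\<in>Ls. indicator S (x i)) \<le> a}
      \<le> exp (lam * a + N * p * (exp (- lam) - 1))"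
    by (simp add: P.emeasure_eq_measure)
  also have "exp (lam * a + N * p * (exp (- lam) - 1)) \<le> exp (- N * (lam * s - p * lam\<^sup>2))"
  proof -
    have e: "exp (- lam) \<le> 1 - lam + lam\<^sup>2" using exp_neg_bound[of lam] lam by simp
    have "N * p \<ge> 0" unfolding N_def p_def by simp
    then have "N * p * (exp (- lam) - 1 + lam - lam\<^sup>2) \<le> 0"
      using e by (simp add: mult_nonneg_nonpos)
    then show ?thesis unfolding a_def by (simp add: algebra_simps)
  qed
  finally show ?thesis unfolding a_def N_def p_def .
qed



lemma num_H1:
  assumes "k \<ge> (7::nat)"
  shows "2 * real (k - 1) \<le> (4/25) * (16/25) ^ (k - 6) * 2 ^ k"
  using assms
proof (induction k rule: dec_induct)
  case base
  then show ?case by simp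
next
  case (step k)
  have "2 * real (Suc k - 1) = 2 * real k" by simp
  also have "\<dots> \<le> (32/25) * (2 * real (k - 1))" using step.hyps by (simp add: of_nat_diff)
  also have "\<dots> \<le> (32/25) * ((4/25) * (16/25) ^ (k - 6) * 2 ^ k)"
    using step.IH by simp
  also have "\<dots> = (4/25) * (16/25) ^ (Suc k - 6) * 2 ^ Suc k"
  proof -
    have "Suc k - 6 = Suc (k - 6)" using step.hyps by simp
    then show ?thesis by simp
  qed
  finally show ?case .
qed

lemma num_H2:
  assumes "K \<ge> (6::nat)"
  shows "5/2 * real K * (5/4) ^ (K - 5) \<le> 2 ^ K"
  using assms
proof (induction K rule: dec_induct)
  case base
  then show ?case by simp
next
  case (step k)
  have e: "Suc k - 5 = Suc (k - 5)" using step.hyps by simp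
  have "5/2 * real (Suc k) * (5/4) ^ (Suc k - 5) = (5/4) * (real k + 1) * (5/2 * (5/4) ^ (k - 5))"
    unfolding e by simp
  also have "\<dots> \<le> (2 * real k) * (5/2 * (5/4) ^ (k - 5))"
    using step.hyps by (intro mult_right_mono) auto
  also have "\<dots> = 2 * (5/2 * real k * (5/4) ^ (k - 5))" by simp
  also have "\<dots> \<le> 2 * 2 ^ k" using step.IH by simp
  finally show ?case by simp
qed

lemma num_H3:
  assumes "K \<ge> (6::nat)"
  shows "(\<Sum>i\<in>{7..K}. (4/5::real) ^ (i - 6)) = 4 * (1 - (4/5) ^ (K - 6))"
  using assms
proof (induction K rule: dec_induct)
  case base
  then show ?case by simp
next
  case (step k)
  have e: "Suc k - 6 = Suc (k - 6)" using step.hyps by simp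
  have "{7..Suc k} = insert (Suc k) {7..k}" using step.hyps by auto
  then have "(\<Sum>i\<in>{7..Suc k}. (4/5::real) ^ (i - 6)) = (4/5) ^ (Suc k - 6) + (\<Sum>i\<in>{7..k}. (4/5::real) ^ (i - 6))"
    by simp
  also have "\<dots> = 4 * (1 - (4/5) ^ (Suc k - 6))" using step.IH unfolding e by simp
  finally show ?case .
qed



lemma num_H4:
  assumes "K \<ge> (6::nat)"
  shows "(\<Sum>i\<in>{7..K}. (1/2::real) ^ (i - 6)) = 1 - (1/2) ^ (K - 6)"
  using assms
proof (induction K rule: dec_induct)
  case base
  then show ?case by simp
next
  case (step k)
  have e: "Suc k - 6 = Suc (k - 6)" using step.hyps by simp
  have "{7..Suc k} = insert (Suc k) {7..k}" using step.hyps by auto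
  then have "(\<Sum>i\<in>{7..Suc k}. (1/2::real) ^ (i - 6)) = (1/2) ^ (Suc k - 6) + (\<Sum>i\<in>{7..k}. (1/2::real) ^ (i - 6))"
    by simp
  also have "\<dots> = 1 - (1/2) ^ (Suc k - 6)" using step.IH unfolding e by simp
  finally show ?case .
qed

lemma quantile_exists:
  fixes F :: "real \<Rightarrow> real"
  assumes cont: "continuous_on {0..1} F" and F0: "F 0 \<le> 0" and F1: "1 \<le> F 1"
  shows "\<exists>Q. \<forall>s. 0 \<le> s \<and> s \<le> 1 \<longrightarrow> 0 \<le> Q s \<and> Q s \<le> 1 \<and> F (Q s) = s"
proof -
  have "\<forall>s. \<exists>q. 0 \<le> s \<and> s \<le> 1 \<longrightarrow> 0 \<le> q \<and> q \<le> 1 \<and> F q = s"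
  proof
    fix s
    show "\<exists>q. 0 \<le> s \<and> s \<le> 1 \<longrightarrow> 0 \<le> q \<and> q \<le> 1 \<and> F q = s"
    proof (cases "0 \<le> s \<and> s \<le> 1")
      case True
      then have "F 0 \<le> s" "s \<le> F 1" using F0 F1 by auto
      from IVT'[OF this _ cont] obtain q where "0 \<le> q" "q \<le> 1" "F q = s" by auto
      then show ?thesis by blast
    qed auto
  qed
  then show ?thesis by metis
qed

lemma lam_facts:
  fixes N rho L :: real and k :: nat
  assumes N: "N > 0" and rho: "rho > 0" and L: "L = N * rho\<^sup>2" and k: "k \<ge> 7"
  defines "s \<equiv> rho * (2/5) * (4/5::real) ^ (k - 6)"
  defines "lam \<equiv> L * real (k - 1) / (N * s)"
  shows "lam = rho * (5/2 * real (k - 1) * (5/4::real) ^ (k - 6))"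
    and "N * (lam * s - (1 / 2 ^ k) * lam\<^sup>2) \<ge> L * real (k - 1) / 2"
proof -
  have s0: "s > 0" unfolding s_def using rho by simp
  have inv: "(4/5::real) ^ (k - 6) * (5/4) ^ (k - 6) = 1"
    by (simp add: power_mult_distrib[symmetric])
  show l: "lam = rho * (5/2 * real (k - 1) * (5/4::real) ^ (k - 6))"
  proof -
    have "lam * (N * s) = L * real (k - 1)" unfolding lam_def using N s0 by simp
    also have "\<dots> = (rho * (5/2 * real (k - 1) * (5/4::real) ^ (k - 6))) * (N * s)"
      unfolding L s_def using inv
      by (simp add: power2_eq_square algebra_simps)
    finally show ?thesis using N s0 by simp
  qed
  define R where "R = (4/25) * (16/25::real) ^ (k - 6)"
  have R0: "R > 0" unfolding R_def by simp
  have s2: "s\<^sup>2 = rho\<^sup>2 * R"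
    unfolding s_def R_def by (simp add: power_mult_distrib power2_eq_square power_mult_distrib[symmetric])
  have H1: "2 * real (k - 1) \<le> R * 2 ^ k" using num_H1[OF k] unfolding R_def by simp
  have ls: "lam * s = L * real (k - 1) / N" unfolding lam_def using N s0 by simp
  have pl: "N * ((1 / 2 ^ k) * lam\<^sup>2) = L * real (k - 1) ^ 2 / (2 ^ k * R)"
  proof -
    have "N * ((1 / 2 ^ k) * lam\<^sup>2) = N * L\<^sup>2 * real (k - 1) ^ 2 / (2 ^ k * N\<^sup>2 * s\<^sup>2)"
      unfolding lam_def by (simp add: power_divide power_mult_distrib)
    also have "\<dots> = N * L\<^sup>2 * real (k - 1) ^ 2 / (2 ^ k * N * L * R)"
      unfolding s2 L by (simp add: power2_eq_square algebra_simps)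
    also have "\<dots> = L * real (k - 1) ^ 2 / (2 ^ k * R)"
      using N rho R0 unfolding L by (simp add: power2_eq_square field_simps)
    finally show ?thesis .
  qed
  have Lnn: "L \<ge> 0" unfolding L using N by simp
  have "L * real (k - 1) ^ 2 / (2 ^ k * R) \<le> L * real (k - 1) / 2"
  proof -
    have "L * real (k - 1) ^ 2 * 2 = (L * real (k - 1)) * (2 * real (k - 1))"
      by (simp add: power2_eq_square)
    also have "\<dots> \<le> (L * real (k - 1)) * (R * 2 ^ k)"
      using H1 Lnn by (intro mult_left_mono) auto
    finally show ?thesis using R0 by (simp add: field_simps)
  qed
  then show "N * (lam * s - (1 / 2 ^ k) * lam\<^sup>2) \<ge> L * real (k - 1) / 2"
  proof -
    have e1: "N * (lam * s - (1 / 2 ^ k) * lam\<^sup>2) = N * (lam * s) - N * ((1 / 2 ^ k) * lam\<^sup>2)"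
      by (simp add: right_diff_distrib)
    have e2: "N * (lam * s) = L * real (k - 1)" using ls N by simp
    show ?thesis using e1 e2 pl \<open>L * real (k - 1) ^ 2 / (2 ^ k * R) \<le> L * real (k - 1) / 2\<close> by linarith
  qed
qed

lemma chain:
  fixes Cq :: "nat \<Rightarrow> nat \<Rightarrow> real" and D :: "nat \<Rightarrow> nat \<Rightarrow> real" and s :: "nat \<Rightarrow> real"
  assumes even: "\<And>k m. 6 \<le> k \<Longrightarrow> k < K \<Longrightarrow> m \<le> 2^k \<Longrightarrow> Cq (Suc k) (2*m) = Cq k m"
    and odd: "\<And>k m. 6 \<le> k \<Longrightarrow> k < K \<Longrightarrow> m < 2^k \<Longrightarrow> Cq (Suc k) (2*m+1) = Cq k m + D (Suc k) m"
    and base: "\<And>j. j \<le> 64 \<Longrightarrow> \<bar>Cq 6 j - N * (real j / 2^6)\<bar> \<le> N * rho"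
    and dev: "\<And>k m. 7 \<le> k \<Longrightarrow> k \<le> K \<Longrightarrow> m < 2^(k-1) \<Longrightarrow> \<bar>D k m - N / 2^k\<bar> \<le> N * s k"
    and k: "6 \<le> k" "k \<le> K"
  shows "\<forall>j \<le> 2^k. \<bar>Cq k j - N * (real j / 2^k)\<bar> \<le> N * rho + N * (\<Sum>i\<in>{7..k}. s i)"
  using k
proof (induction k rule: dec_induct)
  case base
  then show ?case using assms(3) by simp
next
  case (step k)
  have kK: "k < K" using step by simp
  have IH: "\<forall>j \<le> 2^k. \<bar>Cq k j - N * (real j / 2^k)\<bar> \<le> N * rho + N * (\<Sum>i\<in>{7..k}. s i)"
    using step.IH kK by simp
  have sumS: "(\<Sum>i\<in>{7..Suc k}. s i) = (\<Sum>i\<in>{7..k}. s i) + s (Suc k)"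
  proof -
    have "{7..Suc k} = insert (Suc k) {7..k}" using step.hyps by auto
    then show ?thesis by simp
  qed
  have sk: "N * s (Suc k) \<ge> 0"
  proof -
    have "\<bar>D (Suc k) 0 - N / 2 ^ Suc k\<bar> \<le> N * s (Suc k)"
      using dev[of "Suc k" 0] step.hyps kK by simp
    then show ?thesis using abs_ge_zero order_trans by blast
  qed
  show ?case
  proof (intro allI impI)
    fix j :: nat assume j: "j \<le> 2 ^ Suc k"
    show "\<bar>Cq (Suc k) j - N * (real j / 2 ^ Suc k)\<bar> \<le> N * rho + N * (\<Sum>i\<in>{7..Suc k}. s i)"
    proof (cases "even j")
      case True
      then obtain m where m: "j = 2 * m" by blast
      have m2: "m \<le> 2 ^ k" using j m by simp
      have "Cq (Suc k) j = Cq k m" using even[OF step.hyps(1) kK m2] m by simp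
      moreover have "real j / 2 ^ Suc k = real m / 2 ^ k" using m by simp
      moreover have "\<bar>Cq k m - N * (real m / 2^k)\<bar> \<le> N * rho + N * (\<Sum>i\<in>{7..k}. s i)"
        using IH m2 by simp
      ultimately show ?thesis using sk sumS by (simp add: distrib_left)
    next
      case False
      then obtain m where m: "j = 2 * m + 1" using oddE by blast
      have m2: "m < 2 ^ k" using j m by simp
      have "Cq (Suc k) j = Cq k m + D (Suc k) m" using odd[OF step.hyps(1) kK m2] m by simp
      moreover have "real j / 2 ^ Suc k = real m / 2 ^ k + 1 / 2 ^ Suc k" using m by (simp add: field_simps)
      moreover have "\<bar>D (Suc k) m - N / 2 ^ Suc k\<bar> \<le> N * s (Suc k)"
        using dev[of "Suc k" m] step.hyps kK m2 by simp
      moreover have "\<bar>Cq k m - N * (real m / 2^k)\<bar> \<le> N * rho + N * (\<Sum>i\<in>{7..k}. s i)"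
        using IH m2 by simp
      ultimately show ?thesis using sumS by (simp add: algebra_simps abs_le_iff)
    qed
  qed
qed



lemma conc:
  fixes M :: "real measure" and F :: "real \<Rightarrow> real" and Ls :: "'i set" and eps :: real
  assumes M: "real_distribution M" and F: "F = cdf M"
    and supp: "measure M {0<..<1} = 1"
    and smono: "\<And>x y. 0 \<le> x \<Longrightarrow> x < y \<Longrightarrow> y \<le> 1 \<Longrightarrow> F x < F y"
    and cont: "continuous_on {0..1} F"
    and fin: "finite Ls" and ne: "Ls \<noteq> {}"
    and eps: "0 < eps" "eps < 1"
  shows "\<exists>A \<in> sets (PiM Ls (\<lambda>_. M)). A \<subseteq> {x \<in> space (PiM Ls (\<lambda>_. M)).
          (\<forall>n\<in>Ls. 0 < x n \<and> x n < 1) \<and>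
          (\<forall>z. 0 \<le> z \<longrightarrow> z \<le> 1 \<longrightarrow> \<bar>(\<Sum>n\<in>Ls. indicator {..z} (x n)) / real (card Ls) - F z\<bar>
                 \<le> 18/5 * sqrt (ln (16/eps) / real (card Ls)))}
        \<and> measure (PiM Ls (\<lambda>_. M)) A \<ge> 1 - eps"
proof -
  interpret Mr: real_distribution M by (rule M)
  have Mp: "prob_space M" by (rule Mr.prob_space_axioms)
  interpret P: prob_space "PiM Ls (\<lambda>_. M)" by (rule prob_space_PiM) (use Mp in auto)
  have setsM: "sets M = sets borel" by (rule Mr.events_eq_borel)
  have sM[measurable]: "{..z} \<in> sets M" "{a<..b} \<in> sets M" "{0<..<1} \<in> sets M" for z a b :: real
    using setsM by auto
  define N where "N = real (card Ls)"
  have N0: "N > 0" using fin ne by (simp add: N_def card_gt_0_iff)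
  define L where "L = ln (16/eps)"
  have L16: "ln 16 \<le> L" using eps unfolding L_def by (subst ln_le_cancel_iff) (auto simp: field_simps)
  have L0: "L > 0" using L16 by (smt (verit) ln_gt_zero)
  have expL: "exp (- L) = eps / 16" unfolding L_def using eps by (simp add: exp_minus)
  define rho where "rho = sqrt (L / N)"
  have rho0: "rho > 0" unfolding rho_def using L0 N0 by simp
  have NrL: "L = N * rho\<^sup>2" unfolding rho_def using L0 N0 by simp
  have Fcdf: "F z = measure M {..z}" for z using F by (simp add: cdf_def)
  have F0: "F 0 \<le> 0"
  proof -
    have "{..0::real} \<subseteq> space M - {0<..<1}" by auto
    then have "measure M {..0::real} \<le> measure M (space M - {0<..<1})"
      by (intro Mr.finite_measure_mono) auto
    also have "\<dots> = 0" using Mr.prob_compl[of "{0<..<1}"] supp by simp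
    finally show ?thesis unfolding Fcdf by simp
  qed
  have F1: "1 \<le> F 1"
  proof -
    have "measure M {0<..<1::real} \<le> measure M {..1::real}"
      by (intro Mr.finite_measure_mono) auto
    then show ?thesis unfolding Fcdf using supp by simp
  qed
  have Frange: "0 \<le> F z \<and> F z \<le> 1" for z unfolding Fcdf by simp
  obtain Q where Q: "\<And>s. 0 \<le> s \<Longrightarrow> s \<le> 1 \<Longrightarrow> 0 \<le> Q s \<and> Q s \<le> 1 \<and> F (Q s) = s"
    using quantile_exists[OF cont F0 F1] by blast
  have Qmono: "Q a \<le> Q b" if "0 \<le> a" "a \<le> b" "b \<le> 1" for a b
  proof (rule ccontr)
    assume "\<not> Q a \<le> Q b"
    then have "F (Q b) < F (Q a)" using Q[of a] Q[of b] that by (intro smono) auto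
    then show False using Q[of a] Q[of b] that by auto
  qed
  have massle: "measure M {..Q a} = a" if "0 \<le> a" "a \<le> 1" for a
    using Q[OF that] Fcdf by simp
  have massint: "measure M {Q a<..Q b} = b - a" if "0 \<le> a" "a \<le> b" "b \<le> 1" for a b
  proof -
    have "{Q a<..Q b} = {..Q b} - {..Q a}" by auto
    then have "measure M {Q a<..Q b} = measure M {..Q b} - measure M {..Q a}"
      using Qmono[OF that] by (simp add: Mr.finite_measure_Diff)
    then show ?thesis using massle that by simp
  qed
  define C where "C = (\<lambda>(z::real) (x::'i \<Rightarrow> real). \<Sum>n\<in>Ls. indicator {..z} (x n) :: real)"
  define CI where "CI = (\<lambda>(a::real) (b::real) (x::'i \<Rightarrow> real). \<Sum>n\<in>Ls. indicator {a<..b} (x n) :: real)"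
  have Csplit: "C b x = C a x + CI a b x" if "a \<le> b" for a b x
    unfolding C_def CI_def sum.distrib[symmetric] using that by (intro sum.cong) (auto simp: indicator_def)
  define qf where "qf = (\<lambda>k::nat. \<lambda>j::nat. Q (real j / 2^k))"
  define g where "g = (\<lambda>k::nat. 5/2 * real (k - 1) * (5/4::real) ^ (k - 6))"
  have Kex: "\<exists>k. 6 \<le> k \<and> 1 < rho * g (Suc k)"
  proof -
    define k where "k = max 6 (nat \<lceil>1 / rho\<rceil>)"
    have "1 / rho \<le> real k" unfolding k_def by linarith
    then have a: "1 \<le> rho * real k" using rho0 by (simp add: field_simps)
    have "(1::real) \<le> (5/4) ^ (k - 5)" by (simp add: one_le_power)
    then have "real k * 1 \<le> real k * (5/4) ^ (k - 5)" by (intro mult_left_mono) auto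
    then have b: "rho * real k \<le> rho * (real k * (5/4) ^ (k - 5))" using rho0 by simp
    have "g (Suc k) = 5/2 * (real k * (5/4) ^ (k - 5))"
      unfolding g_def k_def by simp
    then have "rho * g (Suc k) = 5/2 * (rho * (real k * (5/4) ^ (k - 5)))" by simp
    then have "1 < rho * g (Suc k)" using a b by linarith
    moreover have "6 \<le> k" unfolding k_def by simp
    ultimately show ?thesis by blast
  qed
  define K where "K = (LEAST k. 6 \<le> k \<and> 1 < rho * g (Suc k))"
  have K: "6 \<le> K" "1 < rho * g (Suc K)" using LeastI_ex[OF Kex] unfolding K_def[symmetric] by auto
  have Kmin: "rho * g (Suc k) \<le> 1" if "6 \<le> k" "k < K" for k
    using not_less_Least[of k "\<lambda>k. 6 \<le> k \<and> 1 < rho * g (Suc k)"] that unfolding K_def[symmetric] by auto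
  have cut: "1 / 2 ^ K \<le> rho"
  proof -
    have "g (Suc K) = 5/2 * real K * (5/4) ^ (K - 5)" unfolding g_def using K by simp
    then have "g (Suc K) \<le> 2 ^ K" using num_H2[OF K(1)] by simp
    then have "1 < rho * 2 ^ K" using K(2) rho0 by (smt (verit) mult_left_mono)
    then show ?thesis by (simp add: field_simps)
  qed
  define s where "s = (\<lambda>k::nat. rho * (2/5) * (4/5::real) ^ (k - 6))"
  define lam where "lam = (\<lambda>k::nat. L * real (k - 1) / (N * s k))"
  have s0: "s k \<ge> 0" for k unfolding s_def using rho0 by simp
  define E0 where "E0 = (\<Union>j\<in>{..(64::nat)}. {x \<in> space (PiM Ls (\<lambda>_. M)). N * rho \<le> \<bar>C (qf 6 j) x - N * (real j / 2^6)\<bar>})"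
  define EU where "EU = (\<Union>k\<in>{7..K}. \<Union>m\<in>{..<(2::nat)^(k-1)}.
      {x \<in> space (PiM Ls (\<lambda>_. M)). N * (1/2^k + s k) \<le> CI (qf k (2*m)) (qf k (2*m+1)) x})"
  define EL where "EL = (\<Union>k\<in>{7..K}. \<Union>m\<in>{..<(2::nat)^(k-1)}.
      {x \<in> space (PiM Ls (\<lambda>_. M)). CI (qf k (2*m)) (qf k (2*m+1)) x \<le> N * (1/2^k - s k)})"
  define E2 where "E2 = (\<Union>n\<in>Ls. {x \<in> space (PiM Ls (\<lambda>_. M)). x n \<notin> {0<..<1}})"
  define A where "A = space (PiM Ls (\<lambda>_. M)) - (E0 \<union> EU \<union> EL \<union> E2)"
  have mC[measurable]: "C z \<in> borel_measurable (PiM Ls (\<lambda>_. M))" for z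
    unfolding C_def by measurable
  have mCI[measurable]: "CI a b \<in> borel_measurable (PiM Ls (\<lambda>_. M))" for a b
    unfolding CI_def by measurable
  have E0m: "E0 \<in> sets (PiM Ls (\<lambda>_. M))" unfolding E0_def by measurable
  have EUm: "EU \<in> sets (PiM Ls (\<lambda>_. M))" unfolding EU_def by measurable
  have ELm: "EL \<in> sets (PiM Ls (\<lambda>_. M))" unfolding EL_def by measurable
  have E2i: "{x \<in> space (PiM Ls (\<lambda>_. M)). x n \<notin> {0<..<1}} \<in> sets (PiM Ls (\<lambda>_. M))" if n: "n \<in> Ls" for n
  proof -
    have "{x \<in> space (PiM Ls (\<lambda>_. M)). x n \<notin> {0<..<1}} = (\<lambda>x. x n) -` (space M - {0<..<1}) \<inter> space (PiM Ls (\<lambda>_. M))"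
      by (auto simp: Mr.space_eq_univ)
    also have "\<dots> \<in> sets (PiM Ls (\<lambda>_. M))"
      using measurable_sets[OF measurable_component_singleton[OF n, of "\<lambda>_. M"], of "space M - {0<..<1}"] by simp
    finally show ?thesis .
  qed
  have E2m: "E2 \<in> sets (PiM Ls (\<lambda>_. M))" unfolding E2_def using E2i fin by (intro sets.finite_UN) auto
  have Am: "A \<in> sets (PiM Ls (\<lambda>_. M))" unfolding A_def using E0m EUm ELm E2m by auto
  have pE0: "measure (PiM Ls (\<lambda>_. M)) E0 \<le> 130 * exp (- 2 * L)"
  proof -
    have "measure (PiM Ls (\<lambda>_. M)) E0 \<le> (\<Sum>j\<in>{..(64::nat)}. measure (PiM Ls (\<lambda>_. M))
        {x \<in> space (PiM Ls (\<lambda>_. M)). N * rho \<le> \<bar>C (qf 6 j) x - N * (real j / 2^6)\<bar>})"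
      unfolding E0_def by (rule measure_UNION_le) auto
    also have "\<dots> \<le> (\<Sum>j\<in>{..(64::nat)}. 2 * exp (- 2 * L))"
    proof (rule sum_mono)
      fix j :: nat assume j: "j \<in> {..64}"
      have mj: "measure M {..qf 6 j} = real j / 2^6" unfolding qf_def using j by (intro massle) auto
      have "measure (PiM Ls (\<lambda>_. M)) {x \<in> space (PiM Ls (\<lambda>_. M)). N * rho \<le> \<bar>C (qf 6 j) x - N * (real j / 2^6)\<bar>}
          \<le> 2 * exp (- 2 * real (card Ls) * rho\<^sup>2)"
        using hoeff_count[OF Mp fin ne sM(1)[of "qf 6 j"], of rho] rho0 unfolding mj C_def N_def by simp
      also have "- 2 * real (card Ls) * rho\<^sup>2 = - 2 * L" unfolding NrL N_def by simp
      finally show "measure (PiM Ls (\<lambda>_. M)) {x \<in> space (PiM Ls (\<lambda>_. M)). N * rho \<le> \<bar>C (qf 6 j) x - N * (real j / 2^6)\<bar>}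
          \<le> 2 * exp (- 2 * L)" .
    qed
    also have "\<dots> = 130 * exp (- 2 * L)" by simp
    finally show ?thesis .
  qed
  have lev: "2 ^ (k - 1) * exp (- (L * real (k - 1) / 2)) \<le> exp (- L) / 2 * (1/2) ^ (k - 6)" if k: "7 \<le> k" for k
  proof -
    obtain i where i: "k = i + 7" using k by (metis add.commute le_Suc_ex)
    have l4: "ln (16::real) = 2 * ln 4"
    proof -
      have "ln (4 * 4::real) = ln 4 + ln 4" using ln_mult[of "4::real" 4] by simp
      then show ?thesis by simp
    qed
    have e1: "exp (- (L * real (k - 1) / 2)) = exp (- L) * exp (- (L / 2) * real (i + 4))"
      unfolding i by (simp add: exp_add[symmetric] algebra_simps)
    have e2: "exp (- (L / 2) * real (i + 4)) \<le> exp (- ln 4 * real (i + 4))"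
      using L16 l4 by (intro exp_mono mult_right_mono) auto
    have e3: "exp (- ln 4 * real (i + 4)) = (1/4::real) ^ (i + 4)"
    proof -
      have "exp (- ln 4 * real (i + 4)) = exp (real (i + 4) * (- ln 4))" by (simp only: mult.commute)
      also have "\<dots> = exp (- ln 4) ^ (i + 4)" by (rule exp_of_nat_mult)
      also have "exp (- ln 4) = (1/4::real)" by (simp add: exp_minus)
      finally show ?thesis .
    qed
    have e4: "(2::real) ^ (k - 1) * (1/4) ^ (i + 4) = 1/2 * (1/2) ^ (k - 6)"
    proof -
      have "(2::real) ^ (k - 1) * (1/4) ^ (i + 4) = 2 ^ (i + 6) * ((1/2) ^ (i + 4) * (1/2) ^ (i + 4))"
        unfolding i by (simp add: power_mult_distrib[symmetric])
      also have "\<dots> = (2 ^ (i + 4) * (1/2) ^ (i + 4)) * (4 * (1/2) ^ (i + 4))"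
        by (simp add: power_add)
      also have "(2::real) ^ (i + 4) * (1/2) ^ (i + 4) = 1" by (simp add: power_mult_distrib[symmetric])
      also have "4 * (1/2::real) ^ (i + 4) = 1/2 * (1/2) ^ (k - 6)" unfolding i by (simp add: power_add power_one_over)
      finally show ?thesis by simp
    qed
    have "2 ^ (k - 1) * exp (- (L * real (k - 1) / 2)) \<le> 2 ^ (k - 1) * (exp (- L) * (1/4::real) ^ (i + 4))"
    proof -
      have e5: "exp (- (L / 2) * real (i + 4)) \<le> (1/4::real) ^ (i + 4)" using e2 e3 by linarith
      have "exp (- L) * exp (- (L / 2) * real (i + 4)) \<le> exp (- L) * (1/4::real) ^ (i + 4)"
        using e5 by (intro mult_left_mono) auto
      then show ?thesis unfolding e1 by (intro mult_left_mono) auto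
    qed
    also have "\<dots> = exp (- L) * (2 ^ (k - 1) * (1/4) ^ (i + 4))" by simp
    also have "\<dots> = exp (- L) / 2 * (1/2) ^ (k - 6)" unfolding e4 by simp
    finally show ?thesis .
  qed
  have lamok: "0 < lam k \<and> lam k \<le> 1 \<and> N * (lam k * s k - (1 / 2 ^ k) * (lam k)\<^sup>2) \<ge> L * real (k - 1) / 2"
    if k: "7 \<le> k" "k \<le> K" for k
  proof -
    have f1: "lam k = rho * g k" using lam_facts(1)[OF N0 rho0 NrL k(1)] unfolding lam_def s_def g_def by simp
    have "g k = g (Suc (k - 1))" using k by simp
    then have "rho * g k \<le> 1" using Kmin[of "k - 1"] k by simp
    moreover have "0 < lam k" unfolding lam_def s_def using k L0 N0 rho0 by simp
    moreover have "N * (lam k * s k - (1 / 2 ^ k) * (lam k)\<^sup>2) \<ge> L * real (k - 1) / 2"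
      using lam_facts(2)[OF N0 rho0 NrL k(1)] unfolding lam_def s_def by simp
    ultimately show ?thesis using f1 by simp
  qed
  have single: "measure (PiM Ls (\<lambda>_. M)) {x \<in> space (PiM Ls (\<lambda>_. M)). N * (1/2^k + s k) \<le> CI (qf k (2*m)) (qf k (2*m+1)) x}
        \<le> exp (- (L * real (k - 1) / 2)) \<and>
      measure (PiM Ls (\<lambda>_. M)) {x \<in> space (PiM Ls (\<lambda>_. M)). CI (qf k (2*m)) (qf k (2*m+1)) x \<le> N * (1/2^k - s k)}
        \<le> exp (- (L * real (k - 1) / 2))"
    if k: "7 \<le> k" "k \<le> K" and m: "m < 2 ^ (k - 1)" for k m
  proof -
    have "2 * m + 1 \<le> 2 ^ k" using m k by (cases k) auto
    then have "real (2 * m + 1) \<le> real ((2::nat) ^ k)" by (simp only: of_nat_le_iff)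
    then have "real (2 * m + 1) \<le> 2 ^ k" by simp
    then have hb: "real (2 * m + 1) / 2 ^ k \<le> 1" by (simp add: field_simps)
    have ms: "measure M {qf k (2*m)<..qf k (2*m+1)} = 1 / 2 ^ k"
      unfolding qf_def using massint[of "real (2*m) / 2^k" "real (2*m+1) / 2^k"] hb
      by (simp add: field_simps)
    have lk: "0 < lam k" "lam k \<le> 1" "N * (lam k * s k - (1 / 2 ^ k) * (lam k)\<^sup>2) \<ge> L * real (k - 1) / 2"
      using lamok[OF k] by auto
    define X where "X = lam k * s k - (1 / 2 ^ k) * (lam k)\<^sup>2"
    have ex: "exp (- real (card Ls) * X) \<le> exp (- (L * real (k - 1) / 2))"
    proof -
      have "N * X \<ge> L * real (k - 1) / 2" using lk(3) unfolding X_def .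
      then have ee: "exp (- (N * X)) \<le> exp (- (L * real (k - 1) / 2))" by simp
      have eq: "- real (card Ls) * X = - (N * X)" by (simp add: N_def)
      show ?thesis unfolding eq by (rule ee)
    qed
    have cu: "measure (PiM Ls (\<lambda>_. M)) {x \<in> space (PiM Ls (\<lambda>_. M)). N * (1/2^k + s k) \<le> CI (qf k (2*m)) (qf k (2*m+1)) x}
        \<le> exp (- real (card Ls) * X)"
      using chernoff_upper[OF Mp fin sM(2)[of "qf k (2*m)" "qf k (2*m+1)"] lk(1,2), of "s k"]
      unfolding ms CI_def N_def X_def .
    have cl: "measure (PiM Ls (\<lambda>_. M)) {x \<in> space (PiM Ls (\<lambda>_. M)). CI (qf k (2*m)) (qf k (2*m+1)) x \<le> N * (1/2^k - s k)}
        \<le> exp (- real (card Ls) * X)"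
      using chernoff_lower[OF Mp fin sM(2)[of "qf k (2*m)" "qf k (2*m+1)"] lk(1,2), of "s k"]
      unfolding ms CI_def N_def X_def .
    show ?thesis using cu cl ex by linarith
  qed
  have sumlev: "(\<Sum>k\<in>{7..K}. \<Sum>m\<in>{..<(2::nat)^(k-1)}. exp (- (L * real (k - 1) / 2))) \<le> exp (- L) / 2"
  proof -
    have "(\<Sum>k\<in>{7..K}. \<Sum>m\<in>{..<(2::nat)^(k-1)}. exp (- (L * real (k - 1) / 2)))
        = (\<Sum>k\<in>{7..K}. 2 ^ (k - 1) * exp (- (L * real (k - 1) / 2)))" by simp
    also have "\<dots> \<le> (\<Sum>k\<in>{7..K}. exp (- L) / 2 * (1/2) ^ (k - 6))"
      by (rule sum_mono) (use lev in auto)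
    also have "\<dots> = exp (- L) / 2 * (1 - (1/2) ^ (K - 6))"
    proof -
      have "(\<Sum>k\<in>{7..K}. exp (- L) / 2 * (1/2::real) ^ (k - 6)) = exp (- L) / 2 * (\<Sum>k\<in>{7..K}. (1/2::real) ^ (k - 6))"
        by (rule sum_distrib_left[symmetric])
      then show ?thesis using num_H4[OF K(1)] by simp
    qed
    also have "\<dots> \<le> exp (- L) / 2" by simp
    finally show ?thesis .
  qed
  have pEU: "measure (PiM Ls (\<lambda>_. M)) EU \<le> exp (- L) / 2"
  proof -
    have "measure (PiM Ls (\<lambda>_. M)) EU \<le> (\<Sum>k\<in>{7..K}. measure (PiM Ls (\<lambda>_. M)) (\<Union>m\<in>{..<(2::nat)^(k-1)}.
      {x \<in> space (PiM Ls (\<lambda>_. M)). N * (1/2^k + s k) \<le> CI (qf k (2*m)) (qf k (2*m+1)) x}))"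
      unfolding EU_def by (rule measure_UNION_le) auto
    also have "\<dots> \<le> (\<Sum>k\<in>{7..K}. \<Sum>m\<in>{..<(2::nat)^(k-1)}. measure (PiM Ls (\<lambda>_. M))
      {x \<in> space (PiM Ls (\<lambda>_. M)). N * (1/2^k + s k) \<le> CI (qf k (2*m)) (qf k (2*m+1)) x})"
      by (intro sum_mono measure_UNION_le) auto
    also have "\<dots> \<le> (\<Sum>k\<in>{7..K}. \<Sum>m\<in>{..<(2::nat)^(k-1)}. exp (- (L * real (k - 1) / 2)))"
      by (intro sum_mono) (use single in auto)
    finally show ?thesis using sumlev by linarith
  qed
  have pEL: "measure (PiM Ls (\<lambda>_. M)) EL \<le> exp (- L) / 2"
  proof -
    have "measure (PiM Ls (\<lambda>_. M)) EL \<le> (\<Sum>k\<in>{7..K}. measure (PiM Ls (\<lambda>_. M)) (\<Union>m\<in>{..<(2::nat)^(k-1)}.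
      {x \<in> space (PiM Ls (\<lambda>_. M)). CI (qf k (2*m)) (qf k (2*m+1)) x \<le> N * (1/2^k - s k)}))"
      unfolding EL_def by (rule measure_UNION_le) auto
    also have "\<dots> \<le> (\<Sum>k\<in>{7..K}. \<Sum>m\<in>{..<(2::nat)^(k-1)}. measure (PiM Ls (\<lambda>_. M))
      {x \<in> space (PiM Ls (\<lambda>_. M)). CI (qf k (2*m)) (qf k (2*m+1)) x \<le> N * (1/2^k - s k)})"
      by (intro sum_mono measure_UNION_le) auto
    also have "\<dots> \<le> (\<Sum>k\<in>{7..K}. \<Sum>m\<in>{..<(2::nat)^(k-1)}. exp (- (L * real (k - 1) / 2)))"
      by (intro sum_mono) (use single in auto)
    finally show ?thesis using sumlev by linarith
  qed
  have pE2: "measure (PiM Ls (\<lambda>_. M)) E2 \<le> 0"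
  proof -
    have "measure (PiM Ls (\<lambda>_. M)) E2 \<le> (\<Sum>n\<in>Ls. measure (PiM Ls (\<lambda>_. M)) {x \<in> space (PiM Ls (\<lambda>_. M)). x n \<notin> {0<..<1}})"
      unfolding E2_def by (rule measure_UNION_le) (use fin in auto)
    also have "\<dots> = (\<Sum>n\<in>Ls. 0)"
    proof (rule sum.cong)
      fix n assume n: "n \<in> Ls"
      have "measure (PiM Ls (\<lambda>_. M)) {x \<in> space (PiM Ls (\<lambda>_. M)). x n \<notin> {0<..<1}}
          = measure (PiM Ls (\<lambda>_. M)) ((\<lambda>x. x n) -` (space M - {0<..<1}) \<inter> space (PiM Ls (\<lambda>_. M)))"
        by (intro arg_cong[where f="measure (PiM Ls (\<lambda>_. M))"]) (auto simp: Mr.space_eq_univ)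
      also have "\<dots> = measure (distr (PiM Ls (\<lambda>_. M)) M (\<lambda>x. x n)) (space M - {0<..<1})"
        by (rule measure_distr[symmetric]) (use n in auto)
      also have "distr (PiM Ls (\<lambda>_. M)) M (\<lambda>x. x n) = M"
        using distr_PiM_component[of Ls "\<lambda>_. M" n] Mp n by simp
      also have "measure M (space M - {0<..<1}) = 0" using Mr.prob_compl[of "{0<..<1}"] supp by simp
      finally show "measure (PiM Ls (\<lambda>_. M)) {x \<in> space (PiM Ls (\<lambda>_. M)). x n \<notin> {0<..<1}} = 0" .
    qed simp
    finally show ?thesis by simp
  qed
  have pA: "measure (PiM Ls (\<lambda>_. M)) A \<ge> 1 - eps"
  proof -
    have "measure (PiM Ls (\<lambda>_. M)) (E0 \<union> EU \<union> EL \<union> E2) \<le>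
       measure (PiM Ls (\<lambda>_. M)) E0 + measure (PiM Ls (\<lambda>_. M)) EU + measure (PiM Ls (\<lambda>_. M)) EL + measure (PiM Ls (\<lambda>_. M)) E2"
      using E0m EUm ELm E2m
      by (meson add_mono_thms_linordered_semiring(3) measure_Un_le order.trans sets.Un)
    also have "\<dots> \<le> 130 * exp (- 2 * L) + exp (- L) / 2 + exp (- L) / 2 + 0"
      using pE0 pEU pEL pE2 by linarith
    also have "exp (- 2 * L) = exp (- L) * exp (- L)" by (simp add: exp_add[symmetric])
    also have "130 * (exp (- L) * exp (- L)) + exp (- L) / 2 + exp (- L) / 2 + 0 = (130 * eps / 16 + 1) * (eps / 16)"
      unfolding expL by (simp add: algebra_simps)
    also have "\<dots> \<le> eps" using eps by (simp add: field_simps)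
    finally have u: "measure (PiM Ls (\<lambda>_. M)) (E0 \<union> EU \<union> EL \<union> E2) \<le> eps" .
    have "measure (PiM Ls (\<lambda>_. M)) A = 1 - measure (PiM Ls (\<lambda>_. M)) (E0 \<union> EU \<union> EL \<union> E2)"
      unfolding A_def by (rule P.prob_compl) (use E0m EUm ELm E2m in auto)
    then show ?thesis using u by simp
  qed
  have Cmono: "C z1 x \<le> C z2 x" if "z1 \<le> z2" for z1 z2 x
  proof -
    have "0 \<le> CI z1 z2 x" unfolding CI_def by (intro sum_nonneg) auto
    then show ?thesis using Csplit[OF that, of x] by simp
  qed
  have qfeven: "qf (Suc k) (2 * m) = qf k m" for k m unfolding qf_def by simp
  have sumb: "(\<Sum>i\<in>{7..K}. s i) \<le> 8/5 * rho"
  proof -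
    have "(\<Sum>i\<in>{7..K}. s i) = rho * (2/5) * (\<Sum>i\<in>{7..K}. (4/5::real) ^ (i - 6))"
      unfolding s_def by (simp add: sum_distrib_left)
    also have "\<dots> = rho * (2/5) * (4 * (1 - (4/5) ^ (K - 6)))" using num_H3[OF K(1)] by simp
    also have "\<dots> \<le> rho * (2/5) * 4" using rho0 by (intro mult_left_mono) auto
    finally show ?thesis by simp
  qed
  show ?thesis
  proof (intro bexI conjI)
    show "A \<in> sets (PiM Ls (\<lambda>_. M))" by (rule Am)
    show "1 - eps \<le> measure (PiM Ls (\<lambda>_. M)) A" by (rule pA)
    show "A \<subseteq> {x \<in> space (PiM Ls (\<lambda>_. M)).
          (\<forall>n\<in>Ls. 0 < x n \<and> x n < 1) \<and>
          (\<forall>z. 0 \<le> z \<longrightarrow> z \<le> 1 \<longrightarrow> \<bar>(\<Sum>n\<in>Ls. indicator {..z} (x n)) / real (card Ls) - F z\<bar>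
                 \<le> 18/5 * sqrt (ln (16/eps) / real (card Ls)))}"
    proof
      fix x assume xA: "x \<in> A"
      have xs: "x \<in> space (PiM Ls (\<lambda>_. M))" and xE: "x \<notin> E0" "x \<notin> EU" "x \<notin> EL" "x \<notin> E2"
        using xA unfolding A_def by auto
      have pos: "\<forall>n\<in>Ls. 0 < x n \<and> x n < 1" using xs xE(4) unfolding E2_def by auto
      have ev: "C (qf (Suc k) (2*m)) x = C (qf k m) x" for k m using qfeven by simp
      have od: "C (qf (Suc k) (2*m+1)) x = C (qf k m) x + CI (qf (Suc k) (2*m)) (qf (Suc k) (2*m+1)) x"
        if "m < 2^k" for k m
      proof -
        have "real (2*m+1) \<le> real ((2::nat) ^ Suc k)" using that by (simp only: of_nat_le_iff) simp
        then have le1: "real (2*m+1) / 2 ^ Suc k \<le> 1" by (simp add: field_simps)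
        have "qf (Suc k) (2*m) \<le> qf (Suc k) (2*m+1)" unfolding qf_def
          by (rule Qmono) (use le1 in \<open>auto simp: field_simps\<close>)
        from Csplit[OF this, of x] show ?thesis using qfeven by simp
      qed
      have bs: "\<bar>C (qf 6 j) x - N * (real j / 2^6)\<bar> \<le> N * rho" if "j \<le> 64" for j
      proof -
        have "x \<notin> {x \<in> space (PiM Ls (\<lambda>_. M)). N * rho \<le> \<bar>C (qf 6 j) x - N * (real j / 2^6)\<bar>}"
          using xE(1) that unfolding E0_def by blast
        then have "\<not> N * rho \<le> \<bar>C (qf 6 j) x - N * (real j / 2^6)\<bar>" using xs by simp
        then show ?thesis by simp
      qed
      have dv: "\<bar>CI (qf k (2*m)) (qf k (2*m+1)) x - N / 2^k\<bar> \<le> N * s k"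
        if "7 \<le> k" "k \<le> K" "m < 2^(k-1)" for k m
      proof -
        have mk: "m \<in> {..<(2::nat)^(k-1)}" "k \<in> {7..K}" using that by auto
        have "x \<notin> {x \<in> space (PiM Ls (\<lambda>_. M)). N * (1/2^k + s k) \<le> CI (qf k (2*m)) (qf k (2*m+1)) x}"
          using xE(2) mk unfolding EU_def by blast
        then have "\<not> N * (1/2^k + s k) \<le> CI (qf k (2*m)) (qf k (2*m+1)) x" using xs by simp
        moreover have "x \<notin> {x \<in> space (PiM Ls (\<lambda>_. M)). CI (qf k (2*m)) (qf k (2*m+1)) x \<le> N * (1/2^k - s k)}"
          using xE(3) mk unfolding EL_def by blast
        then have "\<not> CI (qf k (2*m)) (qf k (2*m+1)) x \<le> N * (1/2^k - s k)" using xs by simp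
        ultimately show ?thesis by (simp add: abs_le_iff algebra_simps)
      qed
      have ch: "\<forall>j \<le> 2^K. \<bar>C (qf K j) x - N * (real j / 2^K)\<bar> \<le> N * rho + N * (\<Sum>i\<in>{7..K}. s i)"
        apply (rule chain[where K=K and Cq="\<lambda>k j. C (qf k j) x" and D="\<lambda>k m. CI (qf k (2*m)) (qf k (2*m+1)) x"
              and N=N and rho=rho and s=s and k=K])
        subgoal for k m using ev[of k m] by simp
        subgoal for k m using od[of m k] by simp
        subgoal for j using bs[of j] by simp
        subgoal for k m using dv[of k m] by simp
        subgoal using K(1) by simp
        subgoal by simp
        done
      define T where "T = N * rho + N * (\<Sum>i\<in>{7..K}. s i)"
      have T: "T \<le> N * (13/5 * rho)" unfolding T_def using sumb N0 by (simp add: algebra_simps)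
      have fin_bound: "\<bar>C z x / N - F z\<bar> \<le> 18/5 * rho" if z: "0 \<le> z" "z \<le> 1" for z
      proof -
        have Fz: "0 \<le> F z" "F z \<le> 1" using Frange by auto
        have p2: "(0::real) < 2 ^ K" by simp
        define j where "j = nat \<lfloor>F z * 2 ^ K\<rfloor>"
        have fl0: "0 \<le> \<lfloor>F z * 2 ^ K\<rfloor>" using Fz by simp
        have rj: "real j = of_int \<lfloor>F z * 2 ^ K\<rfloor>" unfolding j_def using fl0 by simp
        have j1: "real j \<le> F z * 2 ^ K" unfolding rj by linarith
        have j2: "F z * 2 ^ K < real j + 1" unfolding rj by linarith
        have "F z * 2 ^ K \<le> 2 ^ K" by (rule mult_left_le_one_le) (use Fz p2 in auto)
        then have "real j \<le> 2 ^ K" using j1 by linarith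
        then have "real j \<le> real ((2::nat) ^ K)" by simp
        then have jle: "j \<le> 2 ^ K" by (simp only: of_nat_le_iff)
        define j' where "j' = min (j + 1) (2 ^ K)"
        have j'le: "j' \<le> 2 ^ K" unfolding j'_def by simp
        have j'1: "F z * 2 ^ K \<le> real j'"
        proof (cases "j + 1 \<le> 2 ^ K")
          case True then show ?thesis unfolding j'_def using j2 by simp
        next
          case False then show ?thesis unfolding j'_def using Fz p2 by simp
        qed
        have j'2: "real j' \<le> real j + 1" unfolding j'_def by simp
        have a1: "0 \<le> real j / 2 ^ K" "real j / 2 ^ K \<le> 1" using jle by (auto simp: field_simps)
        have a2: "0 \<le> real j' / 2 ^ K" "real j' / 2 ^ K \<le> 1"
        proof -
          show "0 \<le> real j' / 2 ^ K" by simp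
          have "real j' \<le> real ((2::nat) ^ K)" using j'le by (simp only: of_nat_le_iff)
          then show "real j' / 2 ^ K \<le> 1" by (simp add: field_simps)
        qed
        have lowpt: "qf K j \<le> z"
        proof (rule ccontr)
          assume "\<not> qf K j \<le> z"
          then have "F z < F (qf K j)" using Q[OF a1] z unfolding qf_def by (intro smono) auto
          moreover have "F (qf K j) = real j / 2 ^ K" using Q[OF a1] unfolding qf_def by simp
          ultimately show False using j1 p2 by (simp add: field_simps)
        qed
        have highpt: "z \<le> qf K j'"
        proof (rule ccontr)
          assume "\<not> z \<le> qf K j'"
          then have "F (qf K j') < F z" using Q[OF a2] z unfolding qf_def by (intro smono) auto
          moreover have "F (qf K j') = real j' / 2 ^ K" using Q[OF a2] unfolding qf_def by simp
          ultimately show False using j'1 p2 by (simp add: field_simps)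
        qed
        have c1: "\<bar>C (qf K j') x - N * (real j' / 2^K)\<bar> \<le> T" using ch j'le unfolding T_def by blast
        have c2: "\<bar>C (qf K j) x - N * (real j / 2^K)\<bar> \<le> T" using ch jle unfolding T_def by blast
        have up: "C z x \<le> N * (real j' / 2 ^ K) + T"
          using Cmono[OF highpt, of x] c1 by (simp add: abs_le_iff)
        have lo: "N * (real j / 2 ^ K) - T \<le> C z x"
          using Cmono[OF lowpt, of x] c2 by (simp add: abs_le_iff)
        have u2: "N * (real j' / 2 ^ K) \<le> N * F z + N / 2 ^ K"
        proof -
          have "real j' / 2 ^ K \<le> (real j + 1) / 2 ^ K" using j'2 p2 by (intro divide_right_mono) auto
          moreover have "real j / 2 ^ K \<le> F z" using j1 p2 by (simp add: pos_divide_le_eq)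
          ultimately have "real j' / 2 ^ K \<le> F z + 1 / 2 ^ K" by (simp add: add_divide_distrib)
          then have "N * (real j' / 2 ^ K) \<le> N * (F z + 1 / 2 ^ K)" using N0 by (intro mult_left_mono) auto
          then show ?thesis by (simp add: algebra_simps)
        qed
        have l2: "N * F z - N / 2 ^ K \<le> N * (real j / 2 ^ K)"
        proof -
          have "F z < (real j + 1) / 2 ^ K" using j2 p2 by (simp add: pos_less_divide_eq)
          then have "F z - 1 / 2 ^ K \<le> real j / 2 ^ K" by (simp add: add_divide_distrib)
          then have "N * (F z - 1 / 2 ^ K) \<le> N * (real j / 2 ^ K)" using N0 by (intro mult_left_mono) auto
          then show ?thesis by (simp add: algebra_simps)
        qed
        have cN: "N / 2 ^ K \<le> N * rho" using cut N0 by (simp add: field_simps)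
        have sp: "N * (18/5 * rho) = N * rho + N * (13/5 * rho)" by (simp add: algebra_simps)
        have "\<bar>C z x - N * F z\<bar> \<le> N * (18/5 * rho)" unfolding sp abs_le_iff using up lo u2 l2 cN T by linarith
        then have "\<bar>(C z x - N * F z) / N\<bar> \<le> 18/5 * rho" using N0 by (simp add: field_simps)
        moreover have "(C z x - N * F z) / N = C z x / N - F z" using N0 by (simp add: field_simps)
        ultimately show ?thesis by simp
      qed
      have rr: "sqrt (ln (16/eps) / real (card Ls)) = rho" unfolding rho_def L_def N_def ..
      show "x \<in> {x \<in> space (PiM Ls (\<lambda>_. M)).
          (\<forall>n\<in>Ls. 0 < x n \<and> x n < 1) \<and>
          (\<forall>z. 0 \<le> z \<longrightarrow> z \<le> 1 \<longrightarrow> \<bar>(\<Sum>n\<in>Ls. indicator {..z} (x n)) / real (card Ls) - F z\<bar>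
                 \<le> 18/5 * sqrt (ln (16/eps) / real (card Ls)))}"
        using xs pos fin_bound unfolding rr C_def N_def by auto
    qed
  qed
qed


theorem theorem11:
  fixes M :: "real measure" and F :: "real \<Rightarrow> real" and Ls :: "'i set"
    and beta eps delta Lc Lh :: real and phi B :: nat
  assumes M: "real_distribution M"
    and F: "F = cdf M"
    and supp: "measure M {0<..<1} = 1"
    and Lc: "Lc > 0" and Lh: "Lh \<ge> Lc"
    and Lip: "\<And>x y. 0 \<le> x \<Longrightarrow> x \<le> y \<Longrightarrow> y \<le> 1 \<Longrightarrow>
                 Lc * (y - x) \<le> F y - F x \<and> F y - F x \<le> Lh * (y - x)"
    and Ls: "finite Ls" "Ls \<noteq> {}"
    and beta: "0 < beta" "beta < 1"
    and phi: "phi \<ge> 2"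
    and B: "log (real phi) (1 / beta) + 1 \<le> real B"
    and delta: "0 < delta" "delta < 1"
    and eps: "0 < eps" "eps < 1"
  shows "\<exists>A \<in> sets (PiM Ls (\<lambda>_. M)).
           A \<subseteq> {theta \<in> space (PiM Ls (\<lambda>_. M)).
                  \<forall>l u y. 0 \<le> l \<longrightarrow> u \<le> 1 \<longrightarrow> u - l > delta \<longrightarrow> l \<le> y \<longrightarrow> y \<le> u \<longrightarrow>
                    P_L beta phi B Ls theta (card Ls) eps Lc Lh delta y l u \<le> P_true F y l u \<and>
                    P_true F y l u \<le> P_U beta phi B Ls theta (card Ls) eps Lc Lh delta y l u}
         \<and> measure (PiM Ls (\<lambda>_. M)) A \<ge> 1 - eps"
proof -
  have smono: "F x < F y" if "0 \<le> x" "x < y" "y \<le> 1" for x y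
  proof -
    have "Lc * (y - x) \<le> F y - F x" using Lip[of x y] that by simp
    moreover have "0 < Lc * (y - x)" using Lc that by simp
    ultimately show ?thesis by simp
  qed
  have Fmono: "F x \<le> F y" if "0 \<le> x" "x \<le> y" "y \<le> 1" for x y
    using smono[of x y] that by (cases "x = y") auto
  have Lh0: "Lh > 0" using Lc Lh by simp
  have cont: "continuous_on {0..1} F"
  proof (rule lipschitz_on_continuous_on)
    show "Lh-lipschitz_on {0..1} F"
    proof (rule lipschitz_onI)
      fix x y :: real assume x: "x \<in> {0..1}" and y: "y \<in> {0..1}"
      show "dist (F x) (F y) \<le> Lh * dist x y"
      proof (cases "x \<le> y")
        case True
        then have "F y - F x \<le> Lh * (y - x)" "0 \<le> F y - F x" using Lip[of x y] x y Fmono[of x y] by auto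
        then show ?thesis using True by (simp add: dist_real_def abs_if)
      next
        case False
        then have "F x - F y \<le> Lh * (x - y)" "0 \<le> F x - F y" using Lip[of y x] x y Fmono[of y x] by auto
        then show ?thesis using False by (simp add: dist_real_def abs_if)
      qed
    next
      show "0 \<le> Lh" using Lh0 by simp
    qed
  qed
  define rho where "rho = sqrt (ln (16/eps) / real (card Ls))"
  define e where "e = 18/5 * rho"
  obtain A where Am: "A \<in> sets (PiM Ls (\<lambda>_. M))" and Asub: "A \<subseteq> {x \<in> space (PiM Ls (\<lambda>_. M)).
          (\<forall>n\<in>Ls. 0 < x n \<and> x n < 1) \<and>
          (\<forall>z. 0 \<le> z \<longrightarrow> z \<le> 1 \<longrightarrow> \<bar>(\<Sum>n\<in>Ls. indicator {..z} (x n)) / real (card Ls) - F z\<bar>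
                 \<le> 18/5 * sqrt (ln (16/eps) / real (card Ls)))}"
      and pA: "measure (PiM Ls (\<lambda>_. M)) A \<ge> 1 - eps"
    using conc[OF M F supp smono cont Ls eps] by blast
  define N where "N = real (card Ls)"
  have N0: "N > 0" using Ls by (simp add: N_def card_gt_0_iff)
  have rho0: "rho \<ge> 0" unfolding rho_def using eps by simp
  have eta_eq: "eta (card Ls) eps = sqrt 18 * rho"
    unfolding eta_def rho_def by (simp add: real_sqrt_mult[symmetric])
  have e_le: "e \<le> eta (card Ls) eps"
  proof -
    have "18/5 \<le> sqrt (18::real)" by (rule real_le_rsqrt) (simp add: power2_eq_square)
    then show ?thesis unfolding e_def eta_eq using rho0 by (intro mult_right_mono) auto
  qed
  show ?thesis
  proof (intro bexI conjI)
    show "A \<in> sets (PiM Ls (\<lambda>_. M))" by (rule Am)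
    show "1 - eps \<le> measure (PiM Ls (\<lambda>_. M)) A" by (rule pA)
    show "A \<subseteq> {theta \<in> space (PiM Ls (\<lambda>_. M)).
                  \<forall>l u y. 0 \<le> l \<longrightarrow> u \<le> 1 \<longrightarrow> u - l > delta \<longrightarrow> l \<le> y \<longrightarrow> y \<le> u \<longrightarrow>
                    P_L beta phi B Ls theta (card Ls) eps Lc Lh delta y l u \<le> P_true F y l u \<and>
                    P_true F y l u \<le> P_U beta phi B Ls theta (card Ls) eps Lc Lh delta y l u}"
    proof
      fix x assume xA: "x \<in> A"
      have xs: "x \<in> space (PiM Ls (\<lambda>_. M))" and pos: "\<forall>n\<in>Ls. 0 < x n \<and> x n < 1"
        and bd: "\<And>z. 0 \<le> z \<Longrightarrow> z \<le> 1 \<Longrightarrow> \<bar>(\<Sum>n\<in>Ls. indicator {..z} (x n)) / N - F z\<bar> \<le> e"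
        using xA Asub unfolding e_def rho_def N_def by blast+
      have fp: "final_l beta phi B (x n) \<le> x n \<and> x n \<le> final_u beta phi B (x n)
         \<and> final_u beta phi B (x n) - final_l beta phi B (x n) \<le> beta" if "n \<in> Ls" for n
        using final_props[of "x n" beta phi B] pos that beta phi B by auto
      let ?Fh = "Fhat beta phi B Ls x (card Ls)"
      have err: "- e \<le> ?Fh z - F z \<and> ?Fh z - F z \<le> e + Lh * beta" if z: "0 \<le> z" "z \<le> 1" for z
      proof -
        define z' where "z' = min (z + beta) 1"
        have z': "z \<le> z'" "z' \<le> 1" "z' - z \<le> beta" "0 \<le> z'" unfolding z'_def using z beta by auto
        have Fh: "?Fh z = (\<Sum>n\<in>Ls. if final_u beta phi B (x n) - final_l beta phi B (x n) \<le> beta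
                  \<and> final_l beta phi B (x n) \<le> z then 1 else 0) / N"
          unfolding Fhat_def N_def by simp
        have s1: "(\<Sum>n\<in>Ls. indicator {..z} (x n)) \<le> (\<Sum>n\<in>Ls. if final_u beta phi B (x n) - final_l beta phi B (x n) \<le> beta
                  \<and> final_l beta phi B (x n) \<le> z then 1 else (0::real))"
        proof (rule sum_mono)
          fix n assume n: "n \<in> Ls"
          show "indicator {..z} (x n) \<le> (if final_u beta phi B (x n) - final_l beta phi B (x n) \<le> beta
                  \<and> final_l beta phi B (x n) \<le> z then 1 else (0::real))"
          proof (cases "x n \<le> z")
            case True
            then have "final_l beta phi B (x n) \<le> z" using fp[OF n] by linarith
            then show ?thesis using fp[OF n] by (simp add: indicator_def)
          qed (simp add: indicator_def)
        qed
        have s2: "(\<Sum>n\<in>Ls. if final_u beta phi B (x n) - final_l beta phi B (x n) \<le> beta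
                  \<and> final_l beta phi B (x n) \<le> z then 1 else (0::real)) \<le> (\<Sum>n\<in>Ls. indicator {..z'} (x n))"
        proof (rule sum_mono)
          fix n assume n: "n \<in> Ls"
          show "(if final_u beta phi B (x n) - final_l beta phi B (x n) \<le> beta
                  \<and> final_l beta phi B (x n) \<le> z then 1 else (0::real)) \<le> indicator {..z'} (x n)"
          proof (cases "final_l beta phi B (x n) \<le> z")
            case True
            then have "x n \<le> z + beta" using fp[OF n] by linarith
            moreover have "x n \<le> 1" using pos n by auto
            ultimately have "x n \<le> z'" unfolding z'_def by simp
            then show ?thesis by (simp add: indicator_def)
          qed (simp add: indicator_def)
        qed
        have lo: "(\<Sum>n\<in>Ls. indicator {..z} (x n)) / N \<le> ?Fh z"
          unfolding Fh using s1 N0 by (simp add: divide_right_mono)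
        have up: "?Fh z \<le> (\<Sum>n\<in>Ls. indicator {..z'} (x n)) / N"
          unfolding Fh using s2 N0 by (simp add: divide_right_mono)
        have b1: "\<bar>(\<Sum>n\<in>Ls. indicator {..z} (x n)) / N - F z\<bar> \<le> e" using bd z by simp
        have b2: "\<bar>(\<Sum>n\<in>Ls. indicator {..z'} (x n)) / N - F z'\<bar> \<le> e" using bd z' by simp
        have fz: "F z' - F z \<le> Lh * (z' - z)" using Lip[of z z'] z z' by simp
        have "Lh * (z' - z) \<le> Lh * beta" using z' Lh0 by (intro mult_left_mono) auto
        then show ?thesis using lo up b1 b2 fz by (simp add: abs_le_iff)
      qed
      have goal: "P_L beta phi B Ls x (card Ls) eps Lc Lh delta y l u \<le> P_true F y l u \<and>
                    P_true F y l u \<le> P_U beta phi B Ls x (card Ls) eps Lc Lh delta y l u"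
        if c: "0 \<le> l" "u \<le> 1" "u - l > delta" "l \<le> y" "y \<le> u" for l u y
      proof -
        have lu: "l \<le> 1" "0 \<le> u" "0 \<le> y" "y \<le> 1" using c delta by linarith+
        have rb: "\<bar>P_ratio ?Fh Lc y l u - P_true F y l u\<bar> \<le> (2 * e + Lh * beta) / (Lc * delta)"
        proof (rule ratio_bound)
          show "0 < delta" by (rule delta(1))
          show "0 < Lc" by (rule Lc)
          show "delta < u - l" by (rule c(3))
          show "Lc * (u - l) \<le> F u - F l" using Lip[of l u] c lu by simp
          show "F l \<le> F y" using Fmono[of l y] c lu by simp
          show "F y \<le> F u" using Fmono[of y u] c lu by simp
          show "0 \<le> Lh * beta" using Lh0 beta by simp
        qed (use err[of l] err[of y] err[of u] c lu in auto)
        define E where "E = 2 * (eta (card Ls) eps + 2 * beta * Lh) / (Lc * delta)"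
        have "(2 * e + Lh * beta) / (Lc * delta) \<le> E"
        proof -
          have "2 * e + Lh * beta \<le> 2 * (eta (card Ls) eps + 2 * beta * Lh)"
          proof -
            have "0 \<le> Lh * beta" using Lh0 beta by simp
            moreover have "2 * (eta (card Ls) eps + 2 * beta * Lh) = 2 * eta (card Ls) eps + 4 * (Lh * beta)"
              by (simp add: algebra_simps)
            ultimately show ?thesis using e_le by linarith
          qed
          then show ?thesis unfolding E_def using Lc delta by (intro divide_right_mono) auto
        qed
        then have "\<bar>P_ratio ?Fh Lc y l u - P_true F y l u\<bar> \<le> E" using rb by linarith
        then show ?thesis unfolding P_L_def P_U_def E_def[symmetric] by (simp add: abs_le_iff)
      qed
      show "x \<in> {theta \<in> space (PiM Ls (\<lambda>_. M)).
                  \<forall>l u y. 0 \<le> l \<longrightarrow> u \<le> 1 \<longrightarrow> u - l > delta \<longrightarrow> l \<le> y \<longrightarrow> y \<le> u \<longrightarrow>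
                    P_L beta phi B Ls theta (card Ls) eps Lc Lh delta y l u \<le> P_true F y l u \<and>
                    P_true F y l u \<le> P_U beta phi B Ls theta (card Ls) eps Lc Lh delta y l u}"
        using xs goal by blast
    qed
  qed
qed

end
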